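(* Let $d\ge2$, $n\ge1$. If $U$ is an $n$-qudit unitary with $\mathrm{CiS}[U]=0$, then for every density operator $\rho$ on $(\mathbb{C}^d)^{\otimes n}$, $\bar S^{(2)}(U\rho U^\dagger)\le\bar S^{(2)}(\rho)$.
   Context: $\bar S^{(2)}(\rho)=2^{-n}\sum_{A\subseteq[n]}S^{(2)}(\rho_A)$, where $\rho_A$ is the reduced state on the qudits in $A$ and $S^{(2)}(\rho_A)=-\log\mathrm{Tr}(\rho_A^2)$ (with $S^{(2)}(\rho_\emptyset)=0$). Let $V=\mathbb{Z}_d\times\mathbb{Z}_d$; for $a=(s,t)\in V$, $P_a=X^sZ^t$ with $X|j\rangle=|j+1\bmod d\rangle$, $Z|j\rangle=e^{2\pi ij/d}|j\rangle$; $P_{\vec a}=\bigotimes_iP_{a_i}$, $|\vec a|=\#\{i:a_i\ne(0,0)\}$. $\|A\|_2=(d^{-n}\mathrm{Tr}(A^\dagger A))^{1/2}$. For $\|O\|_2=1$, $P_O[\vec a]=d^{-2n}|\mathrm{Tr}(OP_{\vec a})|^2$, $I[O]=\sum_{\vec a}|\vec a|P_O[\vec a]$, and $\mathrm{CiS}[U]=\max_{\|O\|_2=1}|I[UOU^\dagger]-I[O]|$. *)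

theory Defs
  imports Complex_Main
begin

text \<open>A computational basis state of the qudits in an index set S
 (subset of the qudits 0..n-1) is a digit function j :: nat => nat with j i < d for
 i in S and j i = 0 outside S.  Operators on the qudits in S are complex matrices
 indexed by such basis states, represented as functions of two basis states; only
 their values on basis states matter.\<close>

type_synonym cfg = "nat \<Rightarrow> nat"
type_synonym op = "cfg \<Rightarrow> cfg \<Rightarrow> complex"

definition cfgs :: "nat \<Rightarrow> nat set \<Rightarrow> cfg set" where
  "cfgs d S = {j. (\<forall>i\<in>S. j i < d) \<and> (\<forall>i. i \<notin> S \<longrightarrow> j i = 0)}"

definition qudits :: "nat \<Rightarrow> nat set" where
  "qudits n = {..<n}"

definition mmul :: "nat \<Rightarrow> nat set \<Rightarrow> op \<Rightarrow> op \<Rightarrow> op" where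
  "mmul d S A B = (\<lambda>x y. \<Sum>z\<in>cfgs d S. A x z * B z y)"

definition adj :: "op \<Rightarrow> op" where
  "adj A = (\<lambda>x y. cnj (A y x))"

definition idop :: op where
  "idop = (\<lambda>x y. if x = y then 1 else 0)"

definition tr :: "nat \<Rightarrow> nat set \<Rightarrow> op \<Rightarrow> complex" where
  "tr d S A = (\<Sum>x\<in>cfgs d S. A x x)"

definition unitary :: "nat \<Rightarrow> nat \<Rightarrow> op \<Rightarrow> bool" where
  "unitary d n U \<longleftrightarrow>
     (\<forall>x\<in>cfgs d (qudits n). \<forall>y\<in>cfgs d (qudits n).
        mmul d (qudits n) U (adj U) x y = idop x y \<and> mmul d (qudits n) (adj U) U x y = idop x y)"

definition density :: "nat \<Rightarrow> nat \<Rightarrow> op \<Rightarrow> bool" where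
  "density d n \<rho> \<longleftrightarrow>
     (\<forall>x\<in>cfgs d (qudits n). \<forall>y\<in>cfgs d (qudits n). \<rho> y x = cnj (\<rho> x y)) \<and>
     (\<forall>v :: cfg \<Rightarrow> complex.
        let q = (\<Sum>x\<in>cfgs d (qudits n). \<Sum>y\<in>cfgs d (qudits n). cnj (v x) * \<rho> x y * v y)
        in Im q = 0 \<and> Re q \<ge> 0) \<and>
     tr d (qudits n) \<rho> = 1"

definition merge :: "nat set \<Rightarrow> cfg \<Rightarrow> cfg \<Rightarrow> cfg" where
  "merge A x z = (\<lambda>i. if i \<in> A then x i else z i)"

definition reduced :: "nat \<Rightarrow> nat \<Rightarrow> nat set \<Rightarrow> op \<Rightarrow> op" where
  "reduced d n A \<rho> = (\<lambda>x y. \<Sum>z\<in>cfgs d (qudits n - A). \<rho> (merge A x z) (merge A y z))"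

text \<open>Renyi-2 entropy of a state on the qudits in A (natural logarithm).
 For A = {} this is -log 1 = 0 automatically.\<close>
definition renyi2 :: "nat \<Rightarrow> nat set \<Rightarrow> op \<Rightarrow> real" where
  "renyi2 d A \<sigma> = - ln (Re (tr d A (mmul d A \<sigma> \<sigma>)))"

definition avg_renyi2 :: "nat \<Rightarrow> nat \<Rightarrow> op \<Rightarrow> real" where
  "avg_renyi2 d n \<rho> = (\<Sum>A\<in>Pow (qudits n). renyi2 d A (reduced d n A \<rho>)) / 2 ^ n"

text \<open>Generalized Pauli operators: single qudit X^s Z^t, with
 X|k> = |k+1 mod d>, Z|k> = exp(2 pi i k/d)|k>, so <j|X^s Z^t|k> = [j = k+s mod d] w^(t k).\<close>
definition pauli1 :: "nat \<Rightarrow> nat \<times> nat \<Rightarrow> nat \<Rightarrow> nat \<Rightarrow> complex" where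
  "pauli1 d a j k = (if j = (k + fst a) mod d then cis (2 * pi * real (snd a * k) / real d) else 0)"

type_synonym pstring = "nat \<Rightarrow> nat \<times> nat"

definition pstrings :: "nat \<Rightarrow> nat \<Rightarrow> pstring set" where
  "pstrings d n = {a. (\<forall>i<n. fst (a i) < d \<and> snd (a i) < d) \<and> (\<forall>i\<ge>n. a i = (0,0))}"

definition pauli :: "nat \<Rightarrow> nat \<Rightarrow> pstring \<Rightarrow> op" where
  "pauli d n a = (\<lambda>x y. \<Prod>i<n. pauli1 d (a i) (x i) (y i))"

definition pweight :: "nat \<Rightarrow> pstring \<Rightarrow> nat" where
  "pweight n a = card {i. i < n \<and> a i \<noteq> (0,0)}"

definition norm2 :: "nat \<Rightarrow> nat \<Rightarrow> op \<Rightarrow> real" where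
  "norm2 d n A = sqrt (Re (tr d (qudits n) (mmul d (qudits n) (adj A) A)) / real d ^ n)"

definition pweightdist :: "nat \<Rightarrow> nat \<Rightarrow> op \<Rightarrow> pstring \<Rightarrow> real" where
  "pweightdist d n B a = (cmod (tr d (qudits n) (mmul d (qudits n) B (pauli d n a))))\<^sup>2 / real d ^ (2 * n)"

definition influence :: "nat \<Rightarrow> nat \<Rightarrow> op \<Rightarrow> real" where
  "influence d n B = (\<Sum>a\<in>pstrings d n. real (pweight n a) * pweightdist d n B a)"

definition conj_by :: "nat \<Rightarrow> nat \<Rightarrow> op \<Rightarrow> op \<Rightarrow> op" where
  "conj_by d n U B = mmul d (qudits n) (mmul d (qudits n) U B) (adj U)"

text \<open>Change in influence strength (the maximum over the compact unit sphere, as a supremum).\<close>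
definition CiS :: "nat \<Rightarrow> nat \<Rightarrow> op \<Rightarrow> real" where
  "CiS d n U = (SUP B\<in>{B. norm2 d n B = 1}. \<bar>influence d n (conj_by d n U B) - influence d n B\<bar>)"

end

theory Submission
  imports Defs
begin


lemma cfgs_empty: "cfgs d {} = {\<lambda>_. 0}"
  by (auto simp: cfgs_def)

lemma cfgs_insert_bij:
  assumes "i \<notin> S"
  shows "sum f (cfgs d (insert i S)) = (\<Sum>t<d. \<Sum>z\<in>cfgs d S. f (z(i:=t)))"
proof -
  have "sum f (cfgs d (insert i S)) = sum (\<lambda>(t,z). f (z(i:=t))) ({..<d} \<times> cfgs d S)"
    apply (rule sum.reindex_bij_witness[where j="\<lambda>w. (w i, w(i:=0))" and i="\<lambda>(t,z). z(i:=t)"])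
    using assms by (auto simp: cfgs_def)
  also have "\<dots> = (\<Sum>t<d. \<Sum>z\<in>cfgs d S. f (z(i:=t)))"
    by (simp add: sum.cartesian_product)
  finally show ?thesis .
qed

lemma finite_cfgs: "finite S \<Longrightarrow> finite (cfgs d S)"
proof (induction S rule: finite_induct)
  case empty then show ?case by (simp add: cfgs_empty)
next
  case (insert i S)
  have "cfgs d (insert i S) = (\<lambda>(t,z). z(i:=t)) ` ({..<d} \<times> cfgs d S)"
  proof
    show "cfgs d (insert i S) \<subseteq> (\<lambda>(t,z). z(i:=t)) ` ({..<d} \<times> cfgs d S)"
    proof
      fix w assume w: "w \<in> cfgs d (insert i S)"
      then have "w = (\<lambda>(t,z). z(i:=t)) (w i, w(i:=0))" by auto
      moreover have "(w i, w(i:=0)) \<in> {..<d} \<times> cfgs d S" using w insert by (auto simp: cfgs_def)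
      ultimately show "w \<in> (\<lambda>(t,z). z(i:=t)) ` ({..<d} \<times> cfgs d S)" by blast
    qed
    show "(\<lambda>(t,z). z(i:=t)) ` ({..<d} \<times> cfgs d S) \<subseteq> cfgs d (insert i S)"
      by (auto simp: cfgs_def)
  qed
  then show ?case using insert by simp
qed

lemma card_cfgs: "finite S \<Longrightarrow> card (cfgs d S) = d ^ card S"
proof (induction S rule: finite_induct)
  case empty then show ?case by (simp add: cfgs_empty)
next
  case (insert i S)
  have "card (cfgs d (insert i S)) = (\<Sum>w\<in>cfgs d (insert i S). 1)" by simp
  also have "\<dots> = (\<Sum>t<d. \<Sum>z\<in>cfgs d S. 1)" by (rule cfgs_insert_bij[OF insert(2)])
  also have "\<dots> = d * d ^ card S" using insert by simp
  finally show ?case using insert by simp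
qed

lemma cfgs_merge_split:
  assumes "A \<inter> B = {}"
  shows "sum f (cfgs d (A \<union> B)) = (\<Sum>a\<in>cfgs d A. \<Sum>u\<in>cfgs d B. f (merge A a u))"
proof -
  have "sum f (cfgs d (A \<union> B)) = sum (\<lambda>(a,u). f (merge A a u)) (cfgs d A \<times> cfgs d B)"
    apply (rule sum.reindex_bij_witness[where j="\<lambda>w. (\<lambda>i. if i \<in> A then w i else 0, \<lambda>i. if i \<in> A then 0 else w i)" and i="\<lambda>(a,u). merge A a u"])
    using assms apply (auto simp: cfgs_def merge_def fun_eq_iff)
     apply (metis disjoint_iff)
    apply (rule arg_cong[where f=f])
    apply (auto simp: fun_eq_iff)
    done
  also have "\<dots> = (\<Sum>a\<in>cfgs d A. \<Sum>u\<in>cfgs d B. f (merge A a u))"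
    by (simp add: sum.cartesian_product)
  finally show ?thesis .
qed



locale qd =
  fixes d n :: nat
  assumes d2: "2 \<le> d"
begin

abbreviation "N \<equiv> qudits n"
abbreviation "C \<equiv> cfgs d (qudits n)"

definition nrm :: "op \<Rightarrow> bool" where
  "nrm B \<longleftrightarrow> (\<forall>x y. x \<notin> C \<or> y \<notin> C \<longrightarrow> B x y = 0)"
definition R :: "op \<Rightarrow> op" where
  "R B = (\<lambda>x y. if x \<in> C \<and> y \<in> C then B x y else 0)"
definition mm :: "op \<Rightarrow> op \<Rightarrow> op" where
  "mm A B = (\<lambda>x y. if x \<in> C \<and> y \<in> C then \<Sum>z\<in>C. A x z * B z y else 0)"
definition Id :: op where
  "Id = (\<lambda>x y. if x \<in> C \<and> y \<in> C \<and> x = y then 1 else 0)"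
definition oadd :: "op \<Rightarrow> op \<Rightarrow> op" where
  "oadd A B = (\<lambda>x y. A x y + B x y)"
definition osub :: "op \<Rightarrow> op \<Rightarrow> op" where
  "osub A B = (\<lambda>x y. A x y - B x y)"
definition sc :: "complex \<Rightarrow> op \<Rightarrow> op" where
  "sc c B = (\<lambda>x y. c * B x y)"
definition zo :: op where "zo = (\<lambda>x y. 0)"
definition hs :: "op \<Rightarrow> real" where
  "hs B = (\<Sum>x\<in>C. \<Sum>y\<in>C. (cmod (B x y))\<^sup>2)"
definition ip :: "op \<Rightarrow> op \<Rightarrow> complex" where
  "ip A B = (\<Sum>x\<in>C. \<Sum>y\<in>C. cnj (A x y) * B x y)"
definition trc :: "op \<Rightarrow> complex" where
  "trc B = (\<Sum>x\<in>C. B x x)"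

lemma finC: "finite C" by (simp add: finite_cfgs qudits_def)
lemma zeroC: "(\<lambda>_. 0) \<in> C" using d2 by (simp add: cfgs_def)
lemma C_upd: "x \<in> C \<Longrightarrow> i < n \<Longrightarrow> t < d \<Longrightarrow> x(i:=t) \<in> C"
  by (auto simp: cfgs_def qudits_def)
lemma C_lt: "x \<in> C \<Longrightarrow> x i < d"
proof -
  assume "x \<in> C"
  moreover have "0 < d" using d2 by simp
  ultimately show ?thesis by (cases "i < n") (auto simp: cfgs_def qudits_def)
qed
lemma C_out: "x \<in> C \<Longrightarrow> \<not> i < n \<Longrightarrow> x i = 0"
  by (auto simp: cfgs_def qudits_def)
lemma C_nonempty: "C \<noteq> {}" using zeroC by blast
lemma d_pos: "0 < d" using d2 by simp
lemma card_C: "card C = d ^ n" by (simp add: card_cfgs qudits_def)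

lemma nrm_eqI: "nrm A \<Longrightarrow> nrm B \<Longrightarrow> (\<And>x y. x \<in> C \<Longrightarrow> y \<in> C \<Longrightarrow> A x y = B x y) \<Longrightarrow> A = B"
  unfolding nrm_def by (intro ext) metis

lemma nrm_R[simp]: "nrm (R B)" by (simp add: nrm_def R_def)
lemma nrm_mm[simp]: "nrm (mm A B)" by (simp add: nrm_def mm_def)
lemma nrm_Id[simp]: "nrm Id" by (simp add: nrm_def Id_def)
lemma nrm_zo[simp]: "nrm zo" by (simp add: nrm_def zo_def)
lemma nrm_oadd[simp]: "nrm A \<Longrightarrow> nrm B \<Longrightarrow> nrm (oadd A B)" by (simp add: nrm_def oadd_def)
lemma nrm_osub[simp]: "nrm A \<Longrightarrow> nrm B \<Longrightarrow> nrm (osub A B)" by (simp add: nrm_def osub_def)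
lemma nrm_sc[simp]: "nrm B \<Longrightarrow> nrm (sc c B)" by (simp add: nrm_def sc_def)
lemma nrm_adj[simp]: "nrm B \<Longrightarrow> nrm (adj B)" unfolding nrm_def adj_def by (metis complex_cnj_zero)

lemma R_nrm: "nrm B \<Longrightarrow> R B = B" by (auto simp: nrm_def R_def fun_eq_iff)

lemma mm_assoc: "mm (mm A B) D = mm A (mm B D)"
proof -
  have "(\<Sum>z\<in>C. (\<Sum>w\<in>C. A x w * B w z) * D z y) = (\<Sum>w\<in>C. A x w * (\<Sum>z\<in>C. B w z * D z y))" for x y
    by (simp add: sum_distrib_left sum_distrib_right mult.assoc) (rule sum.swap)
  then show ?thesis by (auto simp: mm_def fun_eq_iff intro!: sum.cong)
qed

lemma mm_Id_left: "nrm A \<Longrightarrow> mm Id A = A"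
proof -
  assume "nrm A"
  have "(\<Sum>z\<in>C. (if x = z then 1 else 0) * A z y) = A x y" if "x \<in> C" for x y
  proof -
    have "(\<Sum>z\<in>C. (if x = z then 1 else 0) * A z y) = (\<Sum>z\<in>C. if x = z then A z y else 0)"
      by (intro sum.cong) auto
    then show ?thesis using that finC by simp
  qed
  then show ?thesis using \<open>nrm A\<close>
    by (intro nrm_eqI nrm_mm) (auto simp: mm_def Id_def cong: if_cong)
qed

lemma mm_Id_right: "nrm A \<Longrightarrow> mm A Id = A"
proof -
  assume "nrm A"
  have "(\<Sum>z\<in>C. A x z * (if z = y then 1 else 0)) = A x y" if "y \<in> C" for x y
  proof -
    have "(\<Sum>z\<in>C. A x z * (if z = y then 1 else 0)) = (\<Sum>z\<in>C. if z = y then A x z else 0)"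
      by (intro sum.cong) auto
    then show ?thesis using that finC by simp
  qed
  then show ?thesis using \<open>nrm A\<close>
    by (intro nrm_eqI nrm_mm) (auto simp: mm_def Id_def cong: if_cong)
qed

lemma mm_R_left: "mm (R A) B = mm A B" by (auto simp: mm_def R_def fun_eq_iff intro!: sum.cong)
lemma mm_R_right: "mm A (R B) = mm A B" by (auto simp: mm_def R_def fun_eq_iff intro!: sum.cong)

lemma mm_oadd_left: "mm (oadd A B) D = oadd (mm A D) (mm B D)"
  by (auto simp: mm_def oadd_def fun_eq_iff distrib_right sum.distrib)
lemma mm_oadd_right: "mm D (oadd A B) = oadd (mm D A) (mm D B)"
  by (auto simp: mm_def oadd_def fun_eq_iff distrib_left sum.distrib)
lemma mm_osub_left: "mm (osub A B) D = osub (mm A D) (mm B D)"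
  by (auto simp: mm_def osub_def fun_eq_iff left_diff_distrib sum_subtractf)
lemma mm_osub_right: "mm D (osub A B) = osub (mm D A) (mm D B)"
  by (auto simp: mm_def osub_def fun_eq_iff right_diff_distrib sum_subtractf)
lemma mm_sc_left: "mm (sc c A) D = sc c (mm A D)"
  by (auto simp: mm_def sc_def fun_eq_iff sum_distrib_left mult.assoc)
lemma mm_sc_right: "mm D (sc c A) = sc c (mm D A)"
  by (auto simp: mm_def sc_def fun_eq_iff sum_distrib_left mult.assoc mult.left_commute)

lemma adj_adj[simp]: "adj (adj A) = A" by (simp add: adj_def)
lemma adj_mm: "adj (mm A B) = mm (adj B) (adj A)"
  by (auto simp: adj_def mm_def fun_eq_iff mult.commute)
lemma adj_Id[simp]: "adj Id = Id" by (auto simp: adj_def Id_def fun_eq_iff)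
lemma adj_oadd: "adj (oadd A B) = oadd (adj A) (adj B)" by (simp add: adj_def oadd_def)
lemma adj_osub: "adj (osub A B) = osub (adj A) (adj B)" by (simp add: adj_def osub_def)
lemma adj_sc: "adj (sc c A) = sc (cnj c) (adj A)" by (simp add: adj_def sc_def)
lemma adj_inj: "adj A = adj B \<Longrightarrow> A = B" by (metis adj_adj)

lemma trc_mm_comm: "trc (mm A B) = trc (mm B A)"
  unfolding trc_def mm_def by (simp add: mult.commute) (rule sum.swap)

lemma trc_R: "trc (R A) = trc A" by (simp add: trc_def R_def)
lemma trc_Id: "trc Id = of_nat (d ^ n)" by (simp add: trc_def Id_def card_C)
lemma trc_oadd: "trc (oadd A B) = trc A + trc B" by (simp add: trc_def oadd_def sum.distrib)
lemma trc_osub: "trc (osub A B) = trc A - trc B" by (simp add: trc_def osub_def sum_subtractf)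
lemma trc_sc: "trc (sc c A) = c * trc A" by (simp add: trc_def sc_def sum_distrib_left)

lemma ip_trc: "ip A B = trc (mm (adj A) B)"
  unfolding ip_def trc_def mm_def adj_def by simp (rule sum.swap)

lemma cnj_mult_self: "cnj z * z = complex_of_real ((cmod z)\<^sup>2)"
  by (metis complex_norm_square mult.commute)

lemma ip_self: "ip B B = of_real (hs B)"
  unfolding ip_def hs_def by (simp add: cnj_mult_self)

lemma hs_nonneg: "0 \<le> hs B" unfolding hs_def by (intro sum_nonneg) auto

lemma hs_zero: "nrm B \<Longrightarrow> hs B = 0 \<Longrightarrow> B = zo"
proof -
  assume nB: "nrm B" and h: "hs B = 0"
  have "\<forall>x\<in>C. (\<Sum>y\<in>C. (cmod (B x y))\<^sup>2) = 0"
    using h finC unfolding hs_def by (subst sum_nonneg_eq_0_iff[symmetric]) (auto intro: sum_nonneg)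
  then have "\<forall>x\<in>C. \<forall>y\<in>C. (cmod (B x y))\<^sup>2 = 0"
    using finC by (subst (asm) sum_nonneg_eq_0_iff) auto
  then show ?thesis using nB by (intro nrm_eqI) (auto simp: zo_def nrm_def)
qed

lemma hs_zo[simp]: "hs zo = 0" by (simp add: hs_def zo_def)

lemma ip_oadd_left: "ip (oadd A B) D = ip A D + ip B D"
  by (simp add: ip_def oadd_def distrib_right sum.distrib)
lemma ip_oadd_right: "ip D (oadd A B) = ip D A + ip D B"
  by (simp add: ip_def oadd_def distrib_left sum.distrib)
lemma ip_osub_left: "ip (osub A B) D = ip A D - ip B D"
  by (simp add: ip_def osub_def left_diff_distrib sum_subtractf)
lemma ip_osub_right: "ip D (osub A B) = ip D A - ip D B"
  by (simp add: ip_def osub_def right_diff_distrib sum_subtractf)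
lemma ip_sc_left: "ip (sc c A) D = cnj c * ip A D"
  by (simp add: ip_def sc_def sum_distrib_left mult.assoc)
lemma ip_sc_right: "ip D (sc c A) = c * ip D A"
  by (simp add: ip_def sc_def sum_distrib_left mult.left_commute)
lemma ip_cnj: "ip B A = cnj (ip A B)"
  by (simp add: ip_def mult.commute)

lemma hs_oadd: "hs (oadd A B) = hs A + hs B + 2 * Re (ip A B)"
proof -
  have "of_real (hs (oadd A B)) = (of_real (hs A + hs B + 2 * Re (ip A B)) :: complex)"
  proof -
    have "of_real (hs (oadd A B)) = ip (oadd A B) (oadd A B)" by (simp add: ip_self)
    also have "\<dots> = ip A A + ip B B + (ip A B + cnj (ip A B))"
      by (simp add: ip_oadd_left ip_oadd_right ip_cnj[of A B])
    also have "ip A B + cnj (ip A B) = of_real (2 * Re (ip A B))"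
      by (simp add: complex_add_cnj)
    finally show ?thesis by (simp add: ip_self)
  qed
  then show ?thesis using of_real_eq_iff by blast
qed

lemma hs_sc: "hs (sc c B) = (cmod c)\<^sup>2 * hs B"
  by (simp add: hs_def sc_def norm_mult power_mult_distrib sum_distrib_left)

lemma osub_oadd: "nrm A \<Longrightarrow> nrm B \<Longrightarrow> oadd B (osub A B) = A"
  by (simp add: oadd_def osub_def)

end


context qd begin

definition E :: "nat \<Rightarrow> op \<Rightarrow> op" where
  "E i B = (\<lambda>x y. if x \<in> C \<and> y \<in> C \<and> x i = y i then (\<Sum>t<d. B (x(i:=t)) (y(i:=t))) / of_nat d else 0)"

abbreviation "C0 i \<equiv> cfgs d (qudits n - {i})"

lemma Csplit: "i < n \<Longrightarrow> sum f C = (\<Sum>t<d. \<Sum>z\<in>C0 i. f (z(i:=t)))"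
proof -
  assume "i < n"
  then have "qudits n = insert i (qudits n - {i})" by (auto simp: qudits_def)
  then have "sum f C = sum f (cfgs d (insert i (qudits n - {i})))" by simp
  also have "\<dots> = (\<Sum>t<d. \<Sum>z\<in>C0 i. f (z(i:=t)))" by (rule cfgs_insert_bij) simp
  finally show ?thesis .
qed

lemma C0_C: assumes "z \<in> C0 i" shows "z \<in> C"
proof -
  have "z j < d" if "j \<in> N" for j
  proof (cases "j = i")
    case True then show ?thesis using assms d_pos by (auto simp: cfgs_def)
  next
    case False then show ?thesis using assms that by (auto simp: cfgs_def)
  qed
  then show ?thesis using assms by (auto simp: cfgs_def)
qed
lemma C0_i: "z \<in> C0 i \<Longrightarrow> z i = 0" by (auto simp: cfgs_def)
lemma C0_upd: "z \<in> C0 i \<Longrightarrow> i < n \<Longrightarrow> t < d \<Longrightarrow> z(i:=t) \<in> C"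
  by (auto simp: cfgs_def qudits_def)
lemma C_C0: "x \<in> C \<Longrightarrow> x(i:=0) \<in> C0 i" by (auto simp: cfgs_def)
lemma C0_upd0: "z \<in> C0 i \<Longrightarrow> z(i:=0) = z" using C0_i by (simp add: fun_upd_idem)

lemma finC0: "finite (C0 i)" by (simp add: finite_cfgs qudits_def)

lemma PS:
  assumes "i < n"
  shows "(\<Sum>x\<in>C. \<Sum>y\<in>C. if x i = y i then g x y else 0)
       = (\<Sum>z\<in>C0 i. \<Sum>w\<in>C0 i. \<Sum>s<d. g (z(i:=s)) (w(i:=s)))"
proof -
  have "(\<Sum>x\<in>C. \<Sum>y\<in>C. if x i = y i then g x y else 0)
      = (\<Sum>t<d. \<Sum>z\<in>C0 i. \<Sum>s<d. \<Sum>w\<in>C0 i. if t = s then g (z(i:=t)) (w(i:=s)) else 0)"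
    using assms by (simp add: Csplit[OF assms])
  also have "\<dots> = (\<Sum>t<d. \<Sum>z\<in>C0 i. \<Sum>w\<in>C0 i. \<Sum>s<d. if t = s then g (z(i:=t)) (w(i:=s)) else 0)"
    by (intro sum.cong refl) (rule sum.swap)
  also have "\<dots> = (\<Sum>t<d. \<Sum>z\<in>C0 i. \<Sum>w\<in>C0 i. g (z(i:=t)) (w(i:=t)))"
    by (simp add: sum.delta)
  also have "\<dots> = (\<Sum>z\<in>C0 i. \<Sum>t<d. \<Sum>w\<in>C0 i. g (z(i:=t)) (w(i:=t)))"
    by (rule sum.swap)
  also have "\<dots> = (\<Sum>z\<in>C0 i. \<Sum>w\<in>C0 i. \<Sum>s<d. g (z(i:=s)) (w(i:=s)))"
    by (intro sum.cong refl) (rule sum.swap)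
  finally show ?thesis .
qed

lemma nrm_E[simp]: "nrm (E i B)" by (simp add: nrm_def E_def)

lemma E_apply: "x \<in> C \<Longrightarrow> y \<in> C \<Longrightarrow> E i B x y = (if x i = y i then (\<Sum>t<d. B (x(i:=t)) (y(i:=t))) / of_nat d else 0)"
  by (simp add: E_def)

lemma E_triv: "i < n \<Longrightarrow> x \<in> C \<Longrightarrow> y \<in> C \<Longrightarrow> E i B x y = (if x i = y i then E i B (x(i:=0)) (y(i:=0)) else 0)"
  using d_pos by (simp add: E_def C_upd)

lemma fix_triv: "i < n \<Longrightarrow> E i X = X \<Longrightarrow> x \<in> C \<Longrightarrow> y \<in> C \<Longrightarrow> X x y = (if x i = y i then X (x(i:=0)) (y(i:=0)) else 0)"
  by (metis E_triv)

lemma triv_fix: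
  assumes i: "i < n" and nX: "nrm X"
    and tr: "\<And>x y. x \<in> C \<Longrightarrow> y \<in> C \<Longrightarrow> X x y = (if x i = y i then X (x(i:=0)) (y(i:=0)) else 0)"
  shows "E i X = X"
proof (rule nrm_eqI[OF nrm_E nX])
  fix x y assume x: "x \<in> C" and y: "y \<in> C"
  show "E i X x y = X x y"
  proof (cases "x i = y i")
    case True
    have "(\<Sum>t<d. X (x(i:=t)) (y(i:=t))) = (\<Sum>t<d. X (x(i:=0)) (y(i:=0)))"
      by (intro sum.cong refl) (subst tr, auto simp: C_upd x y i)
    then show ?thesis using True x y d_pos by (simp add: E_apply tr[OF x y])
  next
    case False then show ?thesis using x y by (simp add: E_apply tr[OF x y])
  qed
qed

lemma E_idem: assumes "i < n" shows "E i (E i B) = E i B"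
  by (rule triv_fix[OF assms nrm_E]) (rule E_triv[OF assms])

lemma E_comm: assumes "i < n" "k < n" shows "E i (E k B) = E k (E i B)"
proof (cases "i = k")
  case True then show ?thesis by simp
next
  case False
  show ?thesis
  proof (rule nrm_eqI[OF nrm_E nrm_E])
    fix x y assume x: "x \<in> C" and y: "y \<in> C"
    have "(\<Sum>t<d. (\<Sum>s<d. B (x(i:=t, k:=s)) (y(i:=t, k:=s))) / of_nat d)
        = (\<Sum>s<d. (\<Sum>t<d. B (x(k:=s, i:=t)) (y(k:=s, i:=t))) / of_nat d)"
      using False by (simp add: sum_divide_distrib fun_upd_twist) (rule sum.swap)
    then show "E i (E k B) x y = E k (E i B) x y"
      using x y assms False by (auto simp: E_apply C_upd sum_divide_distrib[symmetric])
  qed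
qed

lemma E_oadd: "E i (oadd A B) = oadd (E i A) (E i B)"
  by (auto simp: E_def oadd_def fun_eq_iff sum.distrib add_divide_distrib)
lemma E_osub: "E i (osub A B) = osub (E i A) (E i B)"
  by (auto simp: E_def osub_def fun_eq_iff sum_subtractf diff_divide_distrib)
lemma E_sc: "E i (sc c B) = sc c (E i B)"
  by (auto simp: E_def sc_def fun_eq_iff sum_distrib_left)
lemma E_zo: "E i zo = zo" by (auto simp: E_def zo_def fun_eq_iff)
lemma E_R: "i < n \<Longrightarrow> E i (R B) = E i B"
  by (auto simp: E_def R_def fun_eq_iff C_upd C_lt intro!: sum.cong)

lemma E_adj: "E i (adj B) = adj (E i B)"
  by (auto simp: E_def adj_def fun_eq_iff)

lemma E_Id: assumes "i < n" shows "E i Id = Id"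
proof (rule nrm_eqI[OF nrm_E nrm_Id])
  fix x y assume x: "x \<in> C" and y: "y \<in> C"
  show "E i Id x y = Id x y"
  proof (cases "x i = y i")
    case True
    have "(\<Sum>t<d. Id (x(i:=t)) (y(i:=t))) = (\<Sum>t<d. if x = y then 1 else 0)"
    proof (intro sum.cong refl)
      fix t assume "t \<in> {..<d}"
      then have "x(i:=t) = y(i:=t) \<longleftrightarrow> x = y" using True by (metis fun_upd_idem fun_upd_upd)
      then show "Id (x(i:=t)) (y(i:=t)) = (if x = y then 1 else 0)"
        using \<open>t \<in> _\<close> x y assms by (simp add: Id_def C_upd)
    qed
    then show ?thesis using True x y d_pos by (simp add: E_apply Id_def)
  next
    case False then show ?thesis using x y by (auto simp: E_apply Id_def)
  qed
qed

lemma E_trc: assumes i: "i < n" shows "trc (E i B) = trc B"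
proof -
  have "trc (E i B) = (\<Sum>x\<in>C. (\<Sum>t<d. B (x(i:=t)) (x(i:=t))) / of_nat d)"
    unfolding trc_def by (intro sum.cong refl) (simp add: E_apply)
  also have "\<dots> = (\<Sum>s<d. \<Sum>z\<in>C0 i. (\<Sum>t<d. B (z(i:=t)) (z(i:=t))) / of_nat d)"
    by (simp add: Csplit[OF i])
  also have "\<dots> = (\<Sum>z\<in>C0 i. (\<Sum>t<d. B (z(i:=t)) (z(i:=t))))"
    using d_pos by (simp add: sum_divide_distrib[symmetric])
  also have "\<dots> = (\<Sum>t<d. \<Sum>z\<in>C0 i. B (z(i:=t)) (z(i:=t)))"
    by (rule sum.swap)
  also have "\<dots> = trc B" unfolding trc_def by (simp add: Csplit[OF i])
  finally show ?thesis .
qed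

lemma aux_cnj_sum: "(\<Sum>s<d. cnj ((\<Sum>t<d. a t) / of_nat d) * b s) = (\<Sum>s<d. cnj (a s) * ((\<Sum>t<d. b t) / of_nat d))"
proof -
  have "(\<Sum>s<d. cnj ((\<Sum>t<d. a t) / of_nat d) * b s) = cnj ((\<Sum>t<d. a t) / of_nat d) * (\<Sum>s<d. b s)"
    by (simp add: sum_distrib_left)
  also have "\<dots> = (\<Sum>s<d. cnj (a s)) * ((\<Sum>t<d. b t) / of_nat d)"
    by (simp add: cnj_sum)
  also have "\<dots> = (\<Sum>s<d. cnj (a s) * ((\<Sum>t<d. b t) / of_nat d))"
    by (simp add: sum_distrib_right sum_divide_distrib)
  finally show ?thesis .
qed

lemma E_ip: assumes i: "i < n" shows "ip (E i A) B = ip A (E i B)"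
proof -
  have "ip (E i A) B = (\<Sum>x\<in>C. \<Sum>y\<in>C. if x i = y i then cnj ((\<Sum>t<d. A (x(i:=t)) (y(i:=t))) / of_nat d) * B x y else 0)"
    unfolding ip_def by (intro sum.cong refl) (simp add: E_apply)
  also have "\<dots> = (\<Sum>z\<in>C0 i. \<Sum>w\<in>C0 i. \<Sum>s<d. cnj ((\<Sum>t<d. A (z(i:=t)) (w(i:=t))) / of_nat d) * B (z(i:=s)) (w(i:=s)))"
    by (simp add: PS[OF i])
  also have "\<dots> = (\<Sum>z\<in>C0 i. \<Sum>w\<in>C0 i. \<Sum>s<d. cnj (A (z(i:=s)) (w(i:=s))) * ((\<Sum>t<d. B (z(i:=t)) (w(i:=t))) / of_nat d))"
    by (rule sum.cong[OF refl], rule sum.cong[OF refl], rule aux_cnj_sum)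
  also have "\<dots> = (\<Sum>x\<in>C. \<Sum>y\<in>C. if x i = y i then cnj (A x y) * ((\<Sum>t<d. B (x(i:=t)) (y(i:=t))) / of_nat d) else 0)"
    by (simp add: PS[OF i])
  also have "\<dots> = ip A (E i B)"
    unfolding ip_def by (intro sum.cong refl) (simp add: E_apply)
  finally show ?thesis .
qed

end


context qd begin

lemma R_R[simp]: "R (R B) = R B" by (simp add: R_def fun_eq_iff)

lemma mm_Id_left': "mm Id A = R A"
  by (metis R_def mm_Id_left mm_R_right nrm_R)
lemma mm_Id_right': "mm A Id = R A"
  by (metis mm_Id_right mm_R_left nrm_R)

lemma E_bimod_left:
  assumes i: "i < n" and fX: "E i X = X"
  shows "E i (mm X B) = mm X (E i B)"
proof (rule nrm_eqI[OF nrm_E nrm_mm])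
  fix x y assume x: "x \<in> C" and y: "y \<in> C"
  have Xr: "\<And>u w. u \<in> C \<Longrightarrow> w \<in> C \<Longrightarrow> X u w = (if u i = w i then X (u(i:=0)) (w(i:=0)) else 0)"
    using fix_triv[OF i fX] by blast
  show "E i (mm X B) x y = mm X (E i B) x y"
  proof (cases "x i = y i")
    case True
    have t1: "(\<Sum>z\<in>C0 i. X (x(i:=t)) (z(i:=s)) * B (z(i:=s)) (y(i:=t)))
        = (if t = s then (\<Sum>z\<in>C0 i. X (x(i:=0)) z * B (z(i:=t)) (y(i:=t))) else 0)"
      if "t < d" "s < d" for t s
    proof -
      have "X (x(i:=t)) (z(i:=s)) = (if t = s then X (x(i:=0)) z else 0)" if "z \<in> C0 i" for z
        using Xr[OF C_upd[OF x i \<open>t<d\<close>] C0_upd[OF that i \<open>s<d\<close>]] C0_upd0[OF that] by simp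
      then show ?thesis by (auto intro: sum.neutral)
    qed
    have "E i (mm X B) x y = (\<Sum>t<d. \<Sum>w\<in>C. X (x(i:=t)) w * B w (y(i:=t))) / of_nat d"
      using x y True i by (simp add: E_apply mm_def C_upd)
    also have "\<dots> = (\<Sum>t<d. \<Sum>s<d. \<Sum>z\<in>C0 i. X (x(i:=t)) (z(i:=s)) * B (z(i:=s)) (y(i:=t))) / of_nat d"
      by (simp add: Csplit[OF i])
    also have "\<dots> = (\<Sum>t<d. \<Sum>s<d. (if t = s then (\<Sum>z\<in>C0 i. X (x(i:=0)) z * B (z(i:=t)) (y(i:=t))) else 0)) / of_nat d"
      by (intro arg_cong[where f="\<lambda>u. u / of_nat d"] sum.cong refl) (simp add: t1)
    also have "\<dots> = (\<Sum>t<d. \<Sum>z\<in>C0 i. X (x(i:=0)) z * B (z(i:=t)) (y(i:=t))) / of_nat d"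
      by (simp add: sum.delta)
    finally have L: "E i (mm X B) x y = (\<Sum>z\<in>C0 i. X (x(i:=0)) z * ((\<Sum>t<d. B (z(i:=t)) (y(i:=t))) / of_nat d))"
      by (simp add: sum_distrib_left sum_divide_distrib) (rule sum.swap)
    have t2: "X x (z(i:=s)) * E i B (z(i:=s)) y = (if s = x i then X (x(i:=0)) z * ((\<Sum>t<d. B (z(i:=t)) (y(i:=t))) / of_nat d) else 0)"
      if "z \<in> C0 i" "s < d" for z s
      using Xr[OF x C0_upd[OF that(1) i that(2)]] C0_upd0[OF that(1)] True y
      by (auto simp: E_apply C0_upd[OF that(1) i that(2)])
    have "mm X (E i B) x y = (\<Sum>s<d. \<Sum>z\<in>C0 i. X x (z(i:=s)) * E i B (z(i:=s)) y)"
      using x y by (simp add: mm_def Csplit[OF i])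
    also have "\<dots> = (\<Sum>s<d. \<Sum>z\<in>C0 i. (if s = x i then X (x(i:=0)) z * ((\<Sum>t<d. B (z(i:=t)) (y(i:=t))) / of_nat d) else 0))"
      by (intro sum.cong refl) (simp add: t2)
    also have "\<dots> = (\<Sum>s<d. if s = x i then (\<Sum>z\<in>C0 i. X (x(i:=0)) z * ((\<Sum>t<d. B (z(i:=t)) (y(i:=t))) / of_nat d)) else 0)"
      by (intro sum.cong refl) auto
    also have "\<dots> = (\<Sum>z\<in>C0 i. X (x(i:=0)) z * ((\<Sum>t<d. B (z(i:=t)) (y(i:=t))) / of_nat d))"
      using C_lt[OF x] by (simp add: sum.delta')
    finally show ?thesis using L by simp
  next
    case False
    have "X x w * E i B w y = 0" if "w \<in> C" for w
      using Xr[OF x that] False y that by (auto simp: E_apply)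
    then have z: "(\<Sum>w\<in>C. X x w * E i B w y) = 0" by (intro sum.neutral) blast
    show ?thesis using x y False z by (simp add: E_apply mm_def)
  qed
qed

lemma E_bimod_right:
  assumes i: "i < n" and fX: "E i X = X"
  shows "E i (mm B X) = mm (E i B) X"
proof -
  have fX': "E i (adj X) = adj X" using fX by (simp add: E_adj)
  have "adj (E i (mm B X)) = adj (mm (E i B) X)"
    by (simp add: E_adj[symmetric] adj_mm E_bimod_left[OF i fX'])
  then show ?thesis by (rule adj_inj)
qed

lemma E_pyth: assumes i: "i < n" and nB: "nrm B"
  shows "hs B = hs (E i B) + hs (osub B (E i B))"
proof -
  have "ip (E i B) (osub B (E i B)) = 0"
    by (simp add: ip_osub_right E_ip[OF i] E_idem[OF i] ip_cnj[of "E i B" B])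
  then have "hs (oadd (E i B) (osub B (E i B))) = hs (E i B) + hs (osub B (E i B))"
    by (simp add: hs_oadd)
  moreover have "oadd (E i B) (osub B (E i B)) = B" by (simp add: oadd_def osub_def)
  ultimately show ?thesis by simp
qed

lemma E_hs_le: "i < n \<Longrightarrow> nrm B \<Longrightarrow> hs (E i B) \<le> hs B"
  using E_pyth hs_nonneg by (metis le_add_same_cancel1)
lemma E_hs_le2: "i < n \<Longrightarrow> nrm B \<Longrightarrow> hs (osub B (E i B)) \<le> hs B"
  using E_pyth hs_nonneg by (metis le_add_same_cancel2)

definition uni :: "op \<Rightarrow> bool" where
  "uni V \<longleftrightarrow> nrm V \<and> mm V (adj V) = Id \<and> mm (adj V) V = Id"
definition cj :: "op \<Rightarrow> op \<Rightarrow> op" where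
  "cj V B = mm (mm V B) (adj V)"

lemma nrm_cj[simp]: "nrm (cj V B)" by (simp add: cj_def)

lemma uni_adj: "uni V \<Longrightarrow> uni (adj V)" by (auto simp: uni_def)

lemma cj_R: "cj V (R B) = cj V B" by (simp add: cj_def mm_R_right)

lemma cj_mm: assumes "uni V" shows "cj V (mm X Y) = mm (cj V X) (cj V Y)"
proof -
  have "mm (cj V X) (cj V Y) = mm (mm V X) (mm (mm (adj V) V) (mm Y (adj V)))"
    by (simp add: cj_def mm_assoc)
  also have "\<dots> = mm (mm V X) (mm Y (adj V))"
    using assms by (simp add: uni_def mm_Id_left' mm_R_right)
  finally show ?thesis by (simp add: cj_def mm_assoc)
qed

lemma cj_oadd: "cj V (oadd A B) = oadd (cj V A) (cj V B)"
  by (simp add: cj_def mm_oadd_left mm_oadd_right)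
lemma cj_osub: "cj V (osub A B) = osub (cj V A) (cj V B)"
  by (simp add: cj_def mm_osub_left mm_osub_right)
lemma cj_sc: "cj V (sc c A) = sc c (cj V A)"
  by (simp add: cj_def mm_sc_left mm_sc_right)
lemma cj_zo: "cj V zo = zo"
  by (auto simp: cj_def mm_def zo_def fun_eq_iff)
lemma cj_Id: "uni V \<Longrightarrow> cj V Id = Id"
  by (simp add: cj_def mm_Id_right' mm_R_left uni_def)
lemma cj_adj: "adj (cj V B) = cj V (adj B)"
  by (simp add: cj_def adj_mm mm_assoc)
lemma cj_trc: assumes "uni V" shows "trc (cj V B) = trc B"
proof -
  have "trc (cj V B) = trc (mm (adj V) (mm V B))" by (simp add: cj_def trc_mm_comm)
  also have "\<dots> = trc (mm (mm (adj V) V) B)" by (simp add: mm_assoc)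
  also have "\<dots> = trc B" using assms by (simp add: uni_def mm_Id_left' trc_R)
  finally show ?thesis .
qed
lemma cj_ip: assumes "uni V" shows "ip (cj V A) (cj V B) = ip A B"
  by (simp add: ip_trc cj_adj cj_mm[OF assms, symmetric] cj_trc[OF assms])
lemma cj_hs: assumes "uni V" shows "hs (cj V B) = hs B"
  using cj_ip[OF assms, of B B] by (simp add: ip_self)
lemma cj_inv: assumes "uni V" shows "cj (adj V) (cj V B) = R B"
proof -
  have "cj (adj V) (cj V B) = mm (mm (mm (adj V) V) B) (mm (adj V) V)"
    by (simp add: cj_def mm_assoc)
  then show ?thesis using assms by (simp add: uni_def mm_Id_left' mm_Id_right' mm_R_left) 
qed
lemma cj_inv': assumes "uni V" shows "cj V (cj (adj V) B) = R B"
  using cj_inv[OF uni_adj[OF assms]] by simp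

end


context qd begin

definition EE :: "nat set \<Rightarrow> op \<Rightarrow> op" where
  "EE S B = (\<lambda>x y. if x \<in> C \<and> y \<in> C \<and> (\<forall>k\<in>S. x k = y k)
      then (\<Sum>z\<in>cfgs d S. B (merge S z x) (merge S z y)) / of_nat d ^ card S else 0)"

definition F :: "nat \<Rightarrow> op \<Rightarrow> op" where "F i B = osub B (E i B)"
definition Phi :: "op \<Rightarrow> real" where "Phi B = (\<Sum>i<n. hs (F i B))"

lemma E_osub'[simp]: "E i (\<lambda>x y. A x y - B x y) = (\<lambda>x y. E i A x y - E i B x y)"
  using E_osub[of i A B] by (simp add: osub_def)
lemma E_oadd'[simp]: "E i (\<lambda>x y. A x y + B x y) = (\<lambda>x y. E i A x y + E i B x y)"
  using E_oadd[of i A B] by (simp add: oadd_def)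

lemma nrm_EE[simp]: "nrm (EE S B)" by (simp add: nrm_def EE_def)
lemma nrm_F[simp]: "nrm B \<Longrightarrow> nrm (F i B)" by (simp add: F_def)

lemma merge_C: "S \<subseteq> N \<Longrightarrow> z \<in> cfgs d S \<Longrightarrow> x \<in> C \<Longrightarrow> merge S z x \<in> C"
  by (auto simp: cfgs_def merge_def)

lemma EE_empty: "EE {} B = R B"
  by (auto simp: EE_def R_def fun_eq_iff cfgs_empty merge_def)

lemma merge_ins: "i \<notin> S \<Longrightarrow> merge (insert i S) (z(i:=t)) x = merge S z (x(i:=t))"
  by (auto simp: merge_def fun_eq_iff)

lemma EE_insert:
  assumes i: "i < n" and iS: "i \<notin> S" and S: "S \<subseteq> N"
  shows "EE (insert i S) B = E i (EE S B)"
proof (rule nrm_eqI[OF nrm_EE nrm_E])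
  fix x y assume x: "x \<in> C" and y: "y \<in> C"
  have fS: "finite S" using S finite_subset by (auto simp: qudits_def)
  show "EE (insert i S) B x y = E i (EE S B) x y"
  proof (cases "x i = y i \<and> (\<forall>k\<in>S. x k = y k)")
    case True
    have c: "\<forall>k\<in>S. (x(i:=t)) k = (y(i:=t)) k" for t using True iS by auto
    have "E i (EE S B) x y = (\<Sum>t<d. (\<Sum>z\<in>cfgs d S. B (merge S z (x(i:=t))) (merge S z (y(i:=t)))) / of_nat d ^ card S) / of_nat d"
      using True x y i by (simp add: E_apply EE_def C_upd c)
    also have "\<dots> = (\<Sum>t<d. \<Sum>z\<in>cfgs d S. B (merge (insert i S) (z(i:=t)) x) (merge (insert i S) (z(i:=t)) y)) / (of_nat d ^ card S * of_nat d)"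
      by (simp add: merge_ins[OF iS] sum_divide_distrib)
    also have "\<dots> = EE (insert i S) B x y"
      using True x y fS iS by (simp add: EE_def cfgs_insert_bij[OF iS] mult.commute)
    finally show ?thesis by simp
  next
    case False
    show ?thesis
    proof (cases "x i = y i")
      case True
      with False obtain k where k: "k \<in> S" "x k \<noteq> y k" by blast
      then have "k \<noteq> i" using iS by auto
      then have "EE S B (x(i:=t)) (y(i:=t)) = 0" for t using k by (auto simp: EE_def)
      then have L: "E i (EE S B) x y = 0" using x y by (simp add: E_apply)
      have Rr: "EE (insert i S) B x y = 0" using k by (auto simp: EE_def)
      show ?thesis by (simp add: L Rr)
    next
      case False2: False
      then show ?thesis using x y by (auto simp: E_apply EE_def)
    qed
  qed
qed

lemma EE_fixed:
  assumes "finite S" "S \<subseteq> N" "nrm X" "\<forall>k\<in>S. E k X = X"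
  shows "EE S X = X"
  using assms
proof (induction S rule: finite_induct)
  case empty then show ?case by (simp add: EE_empty R_nrm)
next
  case (insert i S)
  then have "i < n" by (auto simp: qudits_def)
  then show ?case using insert by (simp add: EE_insert)
qed

lemma card_N: "card N = n" by (simp add: qudits_def)

lemma EE_N: "EE N B = sc (trc B / of_nat d ^ n) Id"
proof (rule nrm_eqI[OF nrm_EE])
  show "nrm (sc (trc B / of_nat d ^ n) Id)" by simp
  fix x y assume x: "x \<in> C" and y: "y \<in> C"
  have m: "merge N z w = z" if "z \<in> C" "w \<in> C" for z w using that by (auto simp: merge_def fun_eq_iff cfgs_def)
  have e: "(\<forall>k\<in>N. x k = y k) \<longleftrightarrow> x = y" using x y by (auto simp: cfgs_def fun_eq_iff)
  have s: "(\<Sum>z\<in>C. B (merge N z u) (merge N z v)) = trc B" if "u \<in> C" "v \<in> C" for u v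
    unfolding trc_def by (intro sum.cong refl) (simp add: m that)
  show "EE N B x y = sc (trc B / of_nat d ^ n) Id x y"
    using x y by (simp add: EE_def e s sc_def Id_def card_N)
qed

lemma EE_N_fixed: assumes "nrm X" "\<forall>k<n. E k X = X" shows "X = sc (trc X / of_nat d ^ n) Id"
  using EE_fixed[of N X] assms EE_N by (auto simp: qudits_def)

lemma ip_zo[simp]: "ip zo A = 0" "ip A zo = 0" by (simp_all add: ip_def zo_def)

lemma F_E_orth: "i < n \<Longrightarrow> ip (F i Y) (E i Z) = 0"
proof -
  assume i: "i < n"
  have "ip (F i Y) (E i Z) = ip (E i (F i Y)) Z" by (simp add: E_ip[OF i])
  also have "E i (F i Y) = zo" by (simp add: F_def E_osub E_idem[OF i] osub_def zo_def)
  finally show ?thesis by simp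
qed

lemma hs_orth: "ip A B = 0 \<Longrightarrow> hs (oadd A B) = hs A + hs B"
  by (simp add: hs_oadd)

lemma UB:
  assumes "finite S" "S \<subseteq> N" "nrm Y"
  shows "hs (osub Y (EE S Y)) \<le> (\<Sum>k\<in>S. hs (F k Y))"
  using assms
proof (induction S rule: finite_induct)
  case empty then show ?case by (simp add: EE_empty R_nrm osub_def zo_def[symmetric])
next
  case (insert i S)
  then have i: "i < n" by (auto simp: qudits_def)
  let ?W = "EE S Y"
  have eq: "osub Y (EE (insert i S) Y) = oadd (F i Y) (E i (osub Y ?W))"
    using insert i by (simp add: EE_insert F_def E_osub oadd_def osub_def)
  have "hs (osub Y (EE (insert i S) Y)) = hs (F i Y) + hs (E i (osub Y ?W))"
    unfolding eq by (rule hs_orth) (rule F_E_orth[OF i])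
  also have "\<dots> \<le> hs (F i Y) + hs (osub Y ?W)"
    using E_hs_le[OF i, of "osub Y ?W"] insert by simp
  also have "\<dots> \<le> hs (F i Y) + (\<Sum>k\<in>S. hs (F k Y))" using insert by simp
  finally show ?case using insert by simp
qed

lemma pair_bound:
  assumes j: "j < n" and l: "l < n" and jl: "j \<noteq> l" and Y: "nrm Y"
  shows "hs (osub Y (EE N Y)) + hs (F j (F l Y)) \<le> Phi Y"
proof -
  define S where "S = N - {j, l}"
  have fS: "finite S" "S \<subseteq> N" by (auto simp: S_def qudits_def)
  have Neq: "N = insert j (insert l S)" using j l by (auto simp: S_def qudits_def)
  have EEN: "EE N Y = E j (E l (EE S Y))"
  proof -
    have "EE N Y = EE (insert j (insert l S)) Y" using Neq by simp
    also have "\<dots> = E j (EE (insert l S) Y)"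
      using fS j l jl by (intro EE_insert) (auto simp: S_def qudits_def)
    also have "EE (insert l S) Y = E l (EE S Y)"
      using fS l by (intro EE_insert) (auto simp: S_def qudits_def)
    finally show ?thesis .
  qed
  let ?W = "EE S Y"
  have o1: "ip (osub Y (E j (E l Y))) (E j (E l Z)) = 0" for Z
  proof -
    have "ip (osub Y (E j (E l Y))) (E j (E l Z)) = ip (E l (E j (osub Y (E j (E l Y))))) Z"
      by (simp add: E_ip[OF j] E_ip[OF l])
    also have "E l (E j (osub Y (E j (E l Y)))) = zo"
      by (simp add: E_osub E_idem[OF j] E_comm[OF l j] E_idem[OF l] osub_def zo_def)
    finally show ?thesis by simp
  qed
  have "osub Y (EE N Y) = oadd (osub Y (E j (E l Y))) (E j (E l (osub Y ?W)))"
    by (simp add: EEN E_osub oadd_def osub_def)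
  then have h1: "hs (osub Y (EE N Y)) = hs (osub Y (E j (E l Y))) + hs (E j (E l (osub Y ?W)))"
    using o1 by (simp add: hs_orth)
  have h2: "hs (E j (E l (osub Y ?W))) \<le> (\<Sum>k\<in>S. hs (F k Y))"
    using E_hs_le[OF j, of "E l (osub Y ?W)"] E_hs_le[OF l, of "osub Y ?W"] UB[OF fS Y] Y by simp
  have "osub Y (E j (E l Y)) = oadd (F j Y) (E j (F l Y))"
    by (simp add: F_def E_osub oadd_def osub_def)
  then have h3: "hs (osub Y (E j (E l Y))) = hs (F j Y) + hs (E j (F l Y))"
    using F_E_orth[OF j] by (simp add: hs_orth)
  have h4: "hs (F l Y) = hs (E j (F l Y)) + hs (F j (F l Y))"
    using E_pyth[OF j, of "F l Y"] Y by (simp add: F_def)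
  have "Phi Y = hs (F j Y) + hs (F l Y) + (\<Sum>k\<in>S. hs (F k Y))"
  proof -
    have "{..<n} = insert j (insert l S)" using Neq by (simp add: qudits_def)
    moreover have "j \<notin> insert l S" "l \<notin> S" using jl by (auto simp: S_def)
    ultimately show ?thesis using fS by (simp add: Phi_def)
  qed
  then show ?thesis using h1 h2 h3 h4 by simp
qed

end


context qd begin

definition Mj :: "nat \<Rightarrow> op \<Rightarrow> bool" where
  "Mj j X \<longleftrightarrow> nrm X \<and> (\<forall>k<n. k \<noteq> j \<longrightarrow> E k X = X)"

abbreviation e0 :: cfg where "e0 \<equiv> (\<lambda>_. 0)"

lemma rep_M:
  assumes i: "i < n" and M: "Mj i X" and u: "u \<in> C" and v: "v \<in> C"
  shows "X u v = (if \<forall>k\<in>N-{i}. u k = v k then X (e0(i:=u i)) (e0(i:=v i)) else 0)"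
proof -
  let ?S = "N - {i}"
  have fS: "finite ?S" "?S \<subseteq> N" by (auto simp: qudits_def)
  have EX: "EE ?S X = X" using EE_fixed[OF fS] M by (auto simp: Mj_def qudits_def)
  have cu: "e0(i:=u i) \<in> C" "e0(i:=v i) \<in> C" using u v i C_lt zeroC C_upd by auto
  have mg: "merge ?S z w = merge ?S z (e0(i:=w i))" if "w \<in> C" for z w
    using that by (auto simp: merge_def fun_eq_iff cfgs_def qudits_def)
  show ?thesis
  proof (cases "\<forall>k\<in>N-{i}. u k = v k")
    case True
    have "X u v = EE ?S X u v" using EX by simp
    also have "\<dots> = EE ?S X (e0(i:=u i)) (e0(i:=v i))"
      using True u v cu by (simp add: EE_def mg[OF u] mg[OF v])
    also have "\<dots> = X (e0(i:=u i)) (e0(i:=v i))" using EX by simp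
    finally show ?thesis using True by simp
  next
    case False
    then show ?thesis using EX u v by (metis (no_types, lifting) EE_def)
  qed
qed

lemma comm_site:
  assumes i: "i < n" and fX: "E i X = X" and M: "Mj i X'"
  shows "mm X X' = mm X' X"
proof (rule nrm_eqI[OF nrm_mm nrm_mm])
  fix x y assume x: "x \<in> C" and y: "y \<in> C"
  have Xr: "\<And>u w. u \<in> C \<Longrightarrow> w \<in> C \<Longrightarrow> X u w = (if u i = w i then X (u(i:=0)) (w(i:=0)) else 0)"
    using fix_triv[OF i fX] by blast
  have Yr: "\<And>u w. u \<in> C \<Longrightarrow> w \<in> C \<Longrightarrow> X' u w = (if \<forall>k\<in>N-{i}. u k = w k then X' (e0(i:=u i)) (e0(i:=w i)) else 0)"
    using rep_M[OF i M] by blast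
  let ?c = "X (x(i:=0)) (y(i:=0)) * X' (e0(i:=x i)) (e0(i:=y i))"
  have eqC: "w = v(i:=a)" if "w \<in> C" "v \<in> C" "w i = a" "\<forall>k\<in>N-{i}. w k = v k" for w v a
    using that apply (auto simp: fun_eq_iff cfgs_def qudits_def)
    by (metis Diff_iff lessThan_iff singletonD)
  have s1: "X x w * X' w y = (if w = y(i:=x i) then ?c else 0)" if w: "w \<in> C" for w
  proof (cases "w = y(i:=x i)")
    case True then show ?thesis using x y Xr Yr w by simp
  next
    case False
    then have "x i \<noteq> w i \<or> \<not> (\<forall>k\<in>N-{i}. w k = y k)" using eqC[OF w y, of "x i"] by metis
    then show ?thesis using Xr[OF x w] Yr[OF w y] False by auto
  qed
  have s2: "X' x w * X w y = (if w = x(i:=y i) then ?c else 0)" if w: "w \<in> C" for w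
  proof (cases "w = x(i:=y i)")
    case True then show ?thesis using x y Xr Yr w by (simp add: mult.commute)
  next
    case False
    then have "w i \<noteq> y i \<or> \<not> (\<forall>k\<in>N-{i}. x k = w k)" using eqC[OF w x, of "y i"] by metis
    then show ?thesis using Xr[OF w y] Yr[OF x w] False by auto
  qed
  have m1: "y(i:=x i) \<in> C" "x(i:=y i) \<in> C" using x y i C_lt C_upd by auto
  have "mm X X' x y = (\<Sum>w\<in>C. if w = y(i:=x i) then ?c else 0)"
    using x y by (simp add: mm_def s1 cong: sum.cong)
  also have "\<dots> = ?c" using m1 finC by simp
  also have "\<dots> = (\<Sum>w\<in>C. if w = x(i:=y i) then ?c else 0)" using m1 finC by simp
  also have "\<dots> = mm X' X x y"
    using x y by (simp add: mm_def s2 cong: sum.cong)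
  finally show "mm X X' x y = mm X' X x y" .
qed

lemma Mj_mm: "j < n \<Longrightarrow> Mj j X \<Longrightarrow> Mj j Y \<Longrightarrow> Mj j (mm X Y)"
  unfolding Mj_def by (auto simp: E_bimod_left)

lemma Mj_oadd: "Mj j X \<Longrightarrow> Mj j Y \<Longrightarrow> Mj j (oadd X Y)"
  unfolding Mj_def by (auto simp: E_oadd)
lemma Mj_osub: "Mj j X \<Longrightarrow> Mj j Y \<Longrightarrow> Mj j (osub X Y)"
  unfolding Mj_def by (auto simp: E_osub)
lemma Mj_sc: "Mj j X \<Longrightarrow> Mj j (sc c X)"
  unfolding Mj_def by (auto simp: E_sc)
lemma Mj_Id: "Mj j Id"
  unfolding Mj_def by (auto simp: E_Id)
lemma Mj_adj: "Mj j X \<Longrightarrow> Mj j (adj X)"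
  unfolding Mj_def by (auto simp: E_adj)

lemma fix_mm: "k < n \<Longrightarrow> E k X = X \<Longrightarrow> E k Y = Y \<Longrightarrow> E k (mm X Y) = mm X Y"
  by (simp add: E_bimod_left)

lemma F_zo_iff: "nrm Z \<Longrightarrow> F k Z = zo \<longleftrightarrow> E k Z = Z"
proof
  assume "nrm Z" "F k Z = zo"
  then show "E k Z = Z" by (intro nrm_eqI) (auto simp: F_def osub_def zo_def fun_eq_iff)
next
  assume "E k Z = Z" then show "F k Z = zo" by (simp add: F_def osub_def zo_def)
qed

lemma mm_zo[simp]: "mm A zo = zo" "mm zo A = zo" by (auto simp: mm_def zo_def fun_eq_iff)

lemma scalar_fixed: "nrm X \<Longrightarrow> \<forall>k<n. E k X = X \<Longrightarrow> X = sc (trc X / of_nat d ^ n) Id"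
  by (rule EE_N_fixed)

lemma trc_mm_Id: "trc (mm A Id) = trc A" by (simp add: mm_Id_right' trc_R)

lemma prod_norm:
  assumes j: "j < n" and l: "l < n" and jl: "j \<noteq> l" and MX: "Mj j X" and MY: "Mj l Y"
  shows "hs (mm X Y) * of_nat (d ^ n) = hs X * hs Y"
proof -
  let ?A = "mm (adj X) X" and ?B = "mm Y (adj Y)"
  have fA: "E l ?A = ?A" using MX jl l Mj_mm[OF j Mj_adj[OF MX] MX] unfolding Mj_def by auto
  have MB: "Mj l ?B" using Mj_mm[OF l MY Mj_adj[OF MY]] .
  have fEB: "\<forall>k<n. E k (E l ?B) = E l ?B"
  proof (intro allI impI)
    fix k assume k: "k < n"
    show "E k (E l ?B) = E l ?B"
    proof (cases "k = l")
      case True then show ?thesis using E_idem[OF l] by simp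
    next
      case False then show ?thesis using MB k l by (simp add: E_comm[OF k l] Mj_def)
    qed
  qed
  have sB: "E l ?B = sc (trc ?B / of_nat d ^ n) Id"
    using scalar_fixed[OF nrm_E fEB] E_trc[OF l] by simp
  have "complex_of_real (hs (mm X Y)) = trc (mm (adj (mm X Y)) (mm X Y))" by (simp add: ip_self[symmetric] ip_trc)
  also have "\<dots> = trc (mm (mm (mm (adj X) X) Y) (adj Y))"
    by (simp add: adj_mm mm_assoc trc_mm_comm[of "adj Y"])
  also have "\<dots> = trc (E l (mm ?A ?B))" by (simp add: E_trc[OF l] mm_assoc)
  also have "\<dots> = trc (mm ?A (E l ?B))" by (simp add: E_bimod_left[OF l fA])
  also have "\<dots> = trc ?B / of_nat d ^ n * trc ?A" by (simp add: sB mm_sc_right trc_sc trc_mm_Id)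
  also have "trc ?A = of_real (hs X)" by (simp add: ip_trc[symmetric] ip_self)
  also have "trc ?B = of_real (hs Y)" by (subst trc_mm_comm) (simp add: ip_trc[symmetric] ip_self)
  finally have "complex_of_real (hs (mm X Y)) = of_real (hs Y) / of_nat d ^ n * of_real (hs X)" .
  then have "hs (mm X Y) = hs Y / real d ^ n * hs X"
    by (metis (mono_tags, lifting) of_real_divide of_real_eq_iff of_real_mult of_real_of_nat_eq of_real_power)
  then show ?thesis using d_pos by (simp add: field_simps)
qed

definition eu :: "nat \<Rightarrow> nat \<Rightarrow> nat \<Rightarrow> op" where
  "eu j a b = (\<lambda>x y. if x \<in> C \<and> y \<in> C \<and> x j = a \<and> y j = b \<and> (\<forall>k. k \<noteq> j \<longrightarrow> x k = y k) then 1 else 0)"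

lemma nrm_eu[simp]: "nrm (eu j a b)" by (simp add: eu_def nrm_def)

lemma Mj_eu: assumes j: "j < n" shows "Mj j (eu j a b)"
  unfolding Mj_def
proof (intro conjI allI impI nrm_eu)
  fix k assume k: "k < n" "k \<noteq> j"
  show "E k (eu j a b) = eu j a b"
  proof (rule triv_fix[OF k(1) nrm_eu])
    fix x y assume x: "x \<in> C" and y: "y \<in> C"
    show "eu j a b x y = (if x k = y k then eu j a b (x(k:=0)) (y(k:=0)) else 0)"
      using x y k C_C0[THEN C0_C] by (auto simp: eu_def; metis)
  qed
qed

lemma mm_eu_right: assumes j: "j < n" "a < d" and x: "x \<in> C" and y: "y \<in> C"
  shows "mm B (eu j a b) x y = (if y j = b then B x (y(j:=a)) else 0)"
proof -
  have m: "y(j:=a) \<in> C" using C_upd j y by auto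
  have "eu j a b w y = (if w = y(j:=a) \<and> y j = b then 1 else 0)" if "w \<in> C" for w
    using that y by (auto simp: eu_def fun_eq_iff)
  then have "mm B (eu j a b) x y = (\<Sum>w\<in>C. if w = y(j:=a) then (if y j = b then B x w else 0) else 0)"
    using x y by (auto simp: mm_def intro!: sum.cong)
  then show ?thesis using m finC by simp
qed

lemma mm_eu_left: assumes j: "j < n" "b < d" and x: "x \<in> C" and y: "y \<in> C"
  shows "mm (eu j a b) B x y = (if x j = a then B (x(j:=b)) y else 0)"
proof -
  have m: "x(j:=b) \<in> C" using C_upd j x by auto
  have "eu j a b x w = (if w = x(j:=b) \<and> x j = a then 1 else 0)" if "w \<in> C" for w
    using that x by (auto simp: eu_def fun_eq_iff)
  then have "mm (eu j a b) B x y = (\<Sum>w\<in>C. if w = x(j:=b) then (if x j = a then B w y else 0) else 0)"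
    using x y by (auto simp: mm_def intro!: sum.cong)
  then show ?thesis using m finC by simp
qed

lemma commutant:
  assumes j: "j < n" and nB: "nrm B" and cm: "\<And>a b. a < d \<Longrightarrow> b < d \<Longrightarrow> mm B (eu j a b) = mm (eu j a b) B"
  shows "E j B = B"
proof (rule triv_fix[OF j nB])
  fix x y assume x: "x \<in> C" and y: "y \<in> C"
  show "B x y = (if x j = y j then B (x(j:=0)) (y(j:=0)) else 0)"
  proof (cases "x j = y j")
    case False
    have "mm B (eu j (y j) (y j)) x y = mm (eu j (y j) (y j)) B x y" using cm C_lt y by metis
    then show ?thesis using False mm_eu_right[OF j C_lt[OF y] x y] mm_eu_left[OF j C_lt[OF y] x y] by simp
  next
    case True
    have x0: "x(j:=0) \<in> C" using C_upd j x d_pos by auto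
    have "mm B (eu j 0 (y j)) (x(j:=0)) y = mm (eu j 0 (y j)) B (x(j:=0)) y" using cm C_lt y d_pos by metis
    then show ?thesis using True mm_eu_right[OF j d_pos x0 y] mm_eu_left[OF j C_lt[OF y] x0 y]
      by (simp add: fun_upd_idem)
  qed
qed

definition wi :: "nat \<Rightarrow> op" where "wi i = osub (eu i 0 0) (sc (1 / of_nat d) Id)"

lemma E_eu00: assumes i: "i < n" shows "E i (eu i 0 0) = sc (1 / of_nat d) Id"
proof (rule nrm_eqI[OF nrm_E])
  show "nrm (sc (1 / of_nat d) Id)" by simp
  fix x y assume x: "x \<in> C" and y: "y \<in> C"
  have "(\<Sum>t<d. eu i 0 0 (x(i:=t)) (y(i:=t))) = (\<Sum>t<d. if t = 0 then (if \<forall>k. k \<noteq> i \<longrightarrow> x k = y k then 1 else 0) else 0)"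
    using x y i by (intro sum.cong refl) (auto simp: eu_def C_upd)
  also have "\<dots> = (if \<forall>k. k \<noteq> i \<longrightarrow> x k = y k then 1 else 0)" using d_pos by simp
  finally have s: "(\<Sum>t<d. eu i 0 0 (x(i:=t)) (y(i:=t))) = (if \<forall>k. k \<noteq> i \<longrightarrow> x k = y k then 1 else 0)" .
  have "(x i = y i \<and> (\<forall>k. k \<noteq> i \<longrightarrow> x k = y k)) \<longleftrightarrow> x = y" by auto
  then show "E i (eu i 0 0) x y = sc (1 / of_nat d) Id x y"
    using x y by (auto simp: E_apply s sc_def Id_def)
qed

lemma wi_M: "i < n \<Longrightarrow> Mj i (wi i)"
  unfolding wi_def by (intro Mj_osub Mj_eu Mj_sc Mj_Id)

lemma wi_E: assumes i: "i < n" shows "E i (wi i) = zo"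
  using E_eu00[OF i] E_Id[OF i] by (simp add: wi_def E_osub E_sc osub_def zo_def)

lemma wi_nz: assumes i: "i < n" shows "wi i \<noteq> zo"
proof
  assume "wi i = zo"
  then have "wi i e0 e0 = 0" by (simp add: zo_def)
  moreover have "wi i e0 e0 = 1 - 1 / of_nat d"
    using zeroC by (simp add: wi_def eu_def osub_def sc_def Id_def)
  moreover have "(1 - 1 / of_nat d :: complex) \<noteq> 0" using d2 by simp
  ultimately show False by simp
qed

lemma nrm_wi[simp]: "nrm (wi i)" by (simp add: wi_def)

end


context qd begin

lemma F_oadd: "F j (oadd X Y) = oadd (F j X) (F j Y)"
  by (simp add: F_def E_oadd oadd_def osub_def fun_eq_iff)

lemma Mj_Phi: assumes j: "j < n" and M: "Mj j Z" shows "Phi Z = hs (F j Z)"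
proof -
  have "Phi Z = (\<Sum>k<n. if k = j then hs (F j Z) else 0)"
    unfolding Phi_def
  proof (intro sum.cong refl)
    fix k assume "k \<in> {..<n}"
    then show "hs (F k Z) = (if k = j then hs (F j Z) else 0)"
      using M F_zo_iff[of Z k] by (auto simp: Mj_def)
  qed
  then show ?thesis using j by simp
qed

lemma Mj_EEN: assumes j: "j < n" and M: "Mj j Z" shows "osub Z (EE N Z) = F j Z"
proof -
  have fS: "finite (N - {j})" "N - {j} \<subseteq> N" by (auto simp: qudits_def)
  have "EE (N - {j}) Z = Z" using EE_fixed[OF fS] M by (auto simp: Mj_def qudits_def)
  moreover have "N = insert j (N - {j})" using j by (auto simp: qudits_def)
  ultimately have "EE N Z = E j Z" using EE_insert[OF j _ fS(2), of Z] by (metis Diff_iff singletonI)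
  then show ?thesis by (simp add: F_def)
qed

lemma cj_EEN: "uni V \<Longrightarrow> cj V (EE N B) = EE N (cj V B)"
  by (simp add: EE_N cj_sc cj_Id cj_trc)

lemma square_lemma:
  assumes j: "j < n" and l: "l < n" and jl: "j \<noteq> l" and nY: "nrm Y"
    and G1: "\<And>a b. a < n \<Longrightarrow> b < n \<Longrightarrow> a \<noteq> b \<Longrightarrow> F a (F b Y) = zo"
    and G2: "F j (F l (mm Y Y)) = zo"
  shows "F j Y = zo \<or> F l Y = zo"
proof -
  define A where "A = F j Y"
  define Cq where "Cq = F l Y"
  define Bq where "Bq = E l (E j Y)"
  have nA: "nrm A" "nrm Cq" "nrm Bq" using nY by (auto simp: A_def Cq_def Bq_def)
  have MA: "Mj j A" unfolding Mj_def using G1 j nA F_zo_iff by (metis A_def)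
  have MC: "Mj l Cq" unfolding Mj_def using G1 l nA F_zo_iff by (metis Cq_def)
  have EjA: "E j A = zo" by (simp add: A_def F_def E_idem[OF j] osub_def zo_def)
  have ElC: "E l Cq = zo" by (simp add: Cq_def F_def E_idem[OF l] osub_def zo_def)
  have AL: "E l A = A" using MA l jl by (simp add: Mj_def)
  have CJ: "E j Cq = Cq" using MC j jl by (simp add: Mj_def)
  have BJ: "E j Bq = Bq" by (simp add: Bq_def E_comm[OF j l] E_idem[OF j])
  have BL: "E l Bq = Bq" by (simp add: Bq_def E_idem[OF l])
  have h: "Y x y - E l Y x y - (E j Y x y - E j (E l Y) x y) = 0" for x y
    using G1[OF j l jl] unfolding F_def osub_def zo_def by (simp add: fun_eq_iff)
  have Ydec: "Y = oadd (oadd A Bq) Cq"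
  proof (rule ext, rule ext)
    fix x y show "Y x y = oadd (oadd A Bq) Cq x y"
      using h[of x y] by (simp add: oadd_def A_def Cq_def Bq_def F_def osub_def E_comm[OF l j] algebra_simps)
  qed
  define Rl where "Rl = oadd (oadd (mm A A) (mm A Bq)) (oadd (mm Bq A) (mm Bq Bq))"
  define Rj where "Rj = oadd (mm Bq Cq) (oadd (mm Cq Bq) (mm Cq Cq))"
  have exp: "mm Y Y = oadd (oadd (mm A Cq) (mm Cq A)) (oadd Rl Rj)"
    unfolding Ydec Rl_def Rj_def
    by (simp add: mm_oadd_left mm_oadd_right) (simp add: oadd_def fun_eq_iff algebra_simps)
  have RlL: "E l Rl = Rl" unfolding Rl_def using AL BL by (simp add: E_oadd fix_mm[OF l])
  have RjJ: "E j Rj = Rj" unfolding Rj_def using CJ BJ by (simp add: E_oadd fix_mm[OF j])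
  have P0l: "F j (F l Z) = zo" if "E l Z = Z" for Z
    using that by (simp add: F_def osub_def zo_def fun_eq_iff E_zo[unfolded zo_def])
  have P0j: "F j (F l Z) = zo" if "E j Z = Z" for Z
  proof -
    have "E j (F l Z) = F l Z" using that by (simp add: F_def E_osub E_comm[OF j l])
    then show ?thesis by (simp add: F_def osub_def zo_def fun_eq_iff)
  qed
  have PAC: "F j (F l (mm A Cq)) = mm A Cq"
  proof -
    have "E l (mm A Cq) = zo" using E_bimod_left[OF l AL] ElC by simp
    then have "F l (mm A Cq) = mm A Cq" by (simp add: F_def osub_def zo_def)
    moreover have "E j (mm A Cq) = zo" using E_bimod_right[OF j CJ] EjA by simp
    ultimately show ?thesis by (simp add: F_def osub_def zo_def)
  qed
  have PCA: "F j (F l (mm Cq A)) = mm Cq A"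
  proof -
    have "E l (mm Cq A) = zo" using E_bimod_right[OF l AL] ElC by simp
    then have "F l (mm Cq A) = mm Cq A" by (simp add: F_def osub_def zo_def)
    moreover have "E j (mm Cq A) = zo" using E_bimod_left[OF j CJ] EjA by simp
    ultimately show ?thesis by (simp add: F_def osub_def zo_def)
  qed
  have "zo = oadd (oadd (mm A Cq) (mm Cq A)) (oadd zo zo)"
    using G2 unfolding exp by (simp add: F_oadd PAC PCA P0l[OF RlL] P0j[OF RjJ])
  moreover have "mm A Cq = mm Cq A" using comm_site[OF l AL MC] .
  ultimately have "mm A Cq = zo" by (simp add: oadd_def zo_def fun_eq_iff)
  then have "hs A * hs Cq = 0" using prod_norm[OF j l jl MA MC] by simp
  then have "hs A = 0 \<or> hs Cq = 0" by simp
  then show ?thesis using hs_zero nA by (auto simp: A_def Cq_def)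
qed

end


locale qdV = qd +
  fixes V :: op
  assumes uV: "uni V" and PV: "\<And>B. nrm B \<Longrightarrow> Phi (cj V B) = Phi B"
begin

lemma nrm_V: "nrm V" using uV by (simp add: uni_def)

lemma G_cj:
  assumes i: "i < n" and M: "Mj i X" and a: "a < n" and b: "b < n" and ab: "a \<noteq> b"
  shows "F a (F b (cj V X)) = zo"
proof -
  let ?Y = "cj V X"
  have nX: "nrm X" using M by (simp add: Mj_def)
  have "Phi ?Y = Phi X" using PV[OF nX] .
  also have "\<dots> = hs (osub X (EE N X))" using Mj_Phi[OF i M] Mj_EEN[OF i M] by simp
  also have "\<dots> = hs (osub ?Y (EE N ?Y))"
    using cj_hs[OF uV, of "osub X (EE N X)"] by (simp add: cj_osub cj_EEN[OF uV])
  finally have "Phi ?Y = hs (osub ?Y (EE N ?Y))" .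
  then have "hs (F a (F b ?Y)) \<le> 0" using pair_bound[OF a b ab nrm_cj[of V X]] by simp
  then have "hs (F a (F b ?Y)) = 0" using hs_nonneg by (simp add: order_antisym)
  then show ?thesis using hs_zero by simp
qed

lemma one_site:
  assumes i: "i < n" and M: "Mj i X" and j: "j < n" and l: "l < n" and jl: "j \<noteq> l"
  shows "F j (cj V X) = zo \<or> F l (cj V X) = zo"
proof (rule square_lemma[OF j l jl nrm_cj])
  show "\<And>a b. a < n \<Longrightarrow> b < n \<Longrightarrow> a \<noteq> b \<Longrightarrow> F a (F b (cj V X)) = zo"
    using G_cj[OF i M] by blast
  show "F j (F l (mm (cj V X) (cj V X))) = zo"
    using G_cj[OF i Mj_mm[OF i M M] j l jl] by (simp add: cj_mm[OF uV])
qed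

lemma oadd_zo[simp]: "oadd A zo = A" "oadd zo A = A" by (simp_all add: oadd_def zo_def)

lemma cj_sc_Id: "cj W (sc c Id) = sc c (cj W Id)" by (simp add: cj_sc)

lemma exists_site: assumes i: "i < n" shows "\<exists>j<n. F j (cj V (wi i)) \<noteq> zo"
proof (rule ccontr)
  assume "\<not> ?thesis"
  then have "\<forall>k<n. E k (cj V (wi i)) = cj V (wi i)" using F_zo_iff[of "cj V (wi i)"] by auto
  then have s: "cj V (wi i) = sc (trc (cj V (wi i)) / of_nat d ^ n) Id" by (rule scalar_fixed[OF nrm_cj])
  have "wi i = cj (adj V) (cj V (wi i))" using cj_inv[OF uV] R_nrm by simp
  also have "\<dots> = sc (trc (cj V (wi i)) / of_nat d ^ n) Id"
    by (subst s) (simp add: cj_sc cj_Id[OF uni_adj[OF uV]])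
  finally have w: "wi i = sc (trc (cj V (wi i)) / of_nat d ^ n) Id" .
  have "E i (wi i) = wi i" by (subst (2) w, subst w) (simp add: E_sc E_Id[OF i])
  then show False using wi_E[OF i] wi_nz[OF i] by simp
qed

definition pi :: "nat \<Rightarrow> nat" where
  "pi i = (SOME j. j < n \<and> F j (cj V (wi i)) \<noteq> zo)"

lemma pi_prop: "i < n \<Longrightarrow> pi i < n \<and> F (pi i) (cj V (wi i)) \<noteq> zo"
  unfolding pi_def using exists_site by (metis (mono_tags, lifting) someI_ex)

lemma oadd_zo_iff: "oadd A B = zo \<Longrightarrow> B = zo \<Longrightarrow> A = zo" by (simp add: oadd_def zo_def fun_eq_iff)

lemma site_map: assumes i: "i < n" and M: "Mj i X" shows "Mj (pi i) (cj V X)"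
  unfolding Mj_def
proof (intro conjI allI impI nrm_cj)
  fix k assume k: "k < n" "k \<noteq> pi i"
  have pi: "pi i < n" "F (pi i) (cj V (wi i)) \<noteq> zo" using pi_prop[OF i] by auto
  have "F k (cj V X) = zo"
  proof (rule ccontr)
    assume nz: "F k (cj V X) \<noteq> zo"
    have a: "F (pi i) (cj V X) = zo" using one_site[OF i M k(1) pi(1) k(2)] nz by simp
    have b: "F k (cj V (wi i)) = zo" using one_site[OF i wi_M[OF i] k(1) pi(1) k(2)] pi(2) by simp
    let ?X' = "oadd X (wi i)"
    have M': "Mj i ?X'" by (rule Mj_oadd[OF M wi_M[OF i]])
    have "F k (cj V ?X') \<noteq> zo" using nz b by (simp add: cj_oadd F_oadd)
    moreover have "F (pi i) (cj V ?X') \<noteq> zo" using a pi(2) by (simp add: cj_oadd F_oadd)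
    ultimately show False using one_site[OF i M' k(1) pi(1) k(2)] by simp
  qed
  then show "E k (cj V X) = cj V X" using F_zo_iff[of "cj V X" k] by simp
qed

lemma hs_pos: "nrm A \<Longrightarrow> A \<noteq> zo \<Longrightarrow> 0 < hs A"
  using hs_zero hs_nonneg by (metis less_eq_real_def)

lemma pi_inj: "inj_on pi {..<n}"
proof (rule inj_onI, rule ccontr)
  fix i i' assume i: "i \<in> {..<n}" and i': "i' \<in> {..<n}" and eq: "pi i = pi i'" and ne: "i \<noteq> i'"
  have i1: "i < n" and i1': "i' < n" using i i' by auto
  let ?P = "mm (wi i) (wi i')"
  have "hs ?P * of_nat (d ^ n) = hs (wi i) * hs (wi i')"
    by (rule prod_norm[OF i1 i1' ne wi_M[OF i1] wi_M[OF i1']])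
  moreover have "0 < hs (wi i) * hs (wi i')" using hs_pos wi_nz i1 i1' by simp
  moreover have "0 < real (d ^ n)" using d_pos by simp
  ultimately have hP: "0 < hs ?P"
    by (metis nonzero_mult_div_cancel_right divide_pos_pos less_irrefl)
  have fi: "E i (wi i') = wi i'" using wi_M[OF i1'] i1 ne by (simp add: Mj_def)
  have fi': "E i' (wi i) = wi i" using wi_M[OF i1] i1' ne by (simp add: Mj_def)
  have "E i ?P = zo" using E_bimod_right[OF i1 fi, of "wi i"] wi_E[OF i1] by simp
  then have Fi: "F i ?P = ?P" by (simp add: F_def osub_def zo_def)
  have "E i' ?P = zo" using E_bimod_left[OF i1' fi', of "wi i'"] wi_E[OF i1'] by simp
  then have Fi': "F i' ?P = ?P" by (simp add: F_def osub_def zo_def)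
  have "hs (F i ?P) + hs (F i' ?P) = (\<Sum>k\<in>{i, i'}. hs (F k ?P))" using ne by simp
  also have "\<dots> \<le> Phi ?P" unfolding Phi_def
    by (rule sum_mono2) (use i i' hs_nonneg in auto)
  finally have p1: "2 * hs ?P \<le> Phi ?P" using Fi Fi' by simp
  have M1: "Mj (pi i) (cj V (wi i))" by (rule site_map[OF i1 wi_M[OF i1]])
  have M2: "Mj (pi i) (cj V (wi i'))" using site_map[OF i1' wi_M[OF i1']] eq by simp
  have Mc: "Mj (pi i) (cj V ?P)"
    using Mj_mm[OF conjunct1[OF pi_prop[OF i1]] M1 M2] by (simp add: cj_mm[OF uV])
  have "Phi ?P = Phi (cj V ?P)" using PV by simp
  also have "\<dots> = hs (F (pi i) (cj V ?P))" using Mj_Phi[OF _ Mc] pi_prop[OF i1] by simp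
  also have "\<dots> \<le> hs (cj V ?P)" unfolding F_def using E_hs_le2 pi_prop[OF i1] by simp
  also have "\<dots> = hs ?P" using cj_hs[OF uV] .
  finally show False using p1 hP by simp
qed

lemma pi_range: "pi ` {..<n} = {..<n}"
  using pi_inj pi_prop by (intro endo_inj_surj) auto

end

lemma (in qdV) qdV_adj: "qdV d n (adj V)"
proof -
  have "Phi (cj (adj V) B) = Phi B" if "nrm B" for B
  proof -
    have "Phi (cj (adj V) B) = Phi (cj V (cj (adj V) B))" using PV[OF nrm_cj] by simp
    also have "\<dots> = Phi B" using cj_inv'[OF uV] R_nrm[OF that] by simp
    finally show ?thesis .
  qed
  then show ?thesis using uni_adj[OF uV] by unfold_locales auto
qed

context qdV begin

lemma pi_inv: assumes i: "i < n" shows "qdV.pi d n (adj V) (pi i) = i"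
proof -
  interpret W: qdV d n "adj V" by (rule qdV_adj)
  have "Mj (W.pi (pi i)) (cj (adj V) (cj V (wi i)))"
    using W.site_map[OF conjunct1[OF pi_prop[OF i]] site_map[OF i wi_M[OF i]]] .
  then have M: "Mj (W.pi (pi i)) (wi i)" using cj_inv[OF uV] R_nrm[OF nrm_wi] by simp
  show ?thesis
  proof (rule ccontr)
    assume "W.pi (pi i) \<noteq> i"
    then have "E i (wi i) = wi i" using M i by (simp add: Mj_def)
    then show False using wi_E[OF i] wi_nz[OF i] by simp
  qed
qed

lemma pi_inv': assumes j: "j < n" shows "pi (qdV.pi d n (adj V) j) = j"
proof -
  interpret W: qdV d n "adj V" by (rule qdV_adj)
  show ?thesis using W.pi_inv[OF j] by simp
qed

lemma fix_map: assumes i: "i < n" and fB: "E i B = B" shows "E (pi i) (cj V B) = cj V B"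
proof -
  interpret W: qdV d n "adj V" by (rule qdV_adj)
  have j: "pi i < n" using pi_prop[OF i] by simp
  show ?thesis
  proof (rule commutant[OF j nrm_cj])
    fix a b assume a: "a < d" and b: "b < d"
    let ?Q = "cj (adj V) (eu (pi i) a b)"
    have MQ: "Mj i ?Q" using W.site_map[OF j Mj_eu[OF j]] pi_inv[OF i] by simp
    have "mm B ?Q = mm ?Q B" by (rule comm_site[OF i fB MQ])
    then have "cj V (mm B ?Q) = cj V (mm ?Q B)" by simp
    then show "mm (cj V B) (eu (pi i) a b) = mm (eu (pi i) a b) (cj V B)"
      using cj_inv'[OF uV] by (simp add: cj_mm[OF uV] R_nrm)
  qed
qed

lemma E_map: assumes i: "i < n" shows "E (pi i) (cj V B) = cj V (E i B)"
proof -
  interpret W: qdV d n "adj V" by (rule qdV_adj)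
  define B' where "B' = R B"
  have nB: "nrm B'" by (simp add: B'_def)
  have j: "pi i < n" using pi_prop[OF i] by simp
  have cB: "cj V B = cj V B'" "E i B = E i B'" using E_R[OF i] cj_R by (auto simp: B'_def)
  let ?Z = "cj V (F i B')"
  have dec: "cj V B' = oadd (cj V (E i B')) ?Z"
  proof -
    have "B' = oadd (E i B') (F i B')" by (simp add: F_def oadd_def osub_def)
    then show ?thesis by (metis cj_oadd)
  qed
  have f1: "E (pi i) (cj V (E i B')) = cj V (E i B')" by (rule fix_map[OF i E_idem[OF i]])
  have Zz: "E (pi i) ?Z = zo"
  proof -
    let ?W0 = "cj (adj V) (E (pi i) ?Z)"
    have fW: "E i ?W0 = ?W0"
      using W.fix_map[OF j E_idem[OF j]] pi_inv[OF i] by simp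
    have eW: "E (pi i) ?Z = cj V ?W0" using cj_inv'[OF uV] R_nrm[OF nrm_E] by simp
    have "complex_of_real (hs (E (pi i) ?Z)) = ip (E (pi i) ?Z) (E (pi i) ?Z)" by (simp add: ip_self)
    also have "\<dots> = ip ?Z (E (pi i) ?Z)" by (simp add: E_ip[OF j] E_idem[OF j])
    also have "\<dots> = ip (F i B') ?W0" by (subst eW, rule cj_ip[OF uV])
    also have "\<dots> = 0" using F_E_orth[OF i, of B' ?W0] fW by simp
    finally have "hs (E (pi i) ?Z) = 0" by simp
    then show ?thesis using hs_zero by simp
  qed
  show ?thesis using dec f1 Zz cB by (simp add: E_oadd)
qed

lemma EE_map: assumes "finite S" "S \<subseteq> N" shows "cj V (EE S B) = EE (pi ` S) (cj V B)"
  using assms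
proof (induction S rule: finite_induct)
  case empty then show ?case by (simp add: EE_empty cj_R R_nrm)
next
  case (insert i S)
  have i: "i < n" and S: "S \<subseteq> N" using insert by (auto simp: qudits_def)
  have pS: "pi ` S \<subseteq> N" using S pi_prop by (auto simp: qudits_def)
  have ni: "pi i \<notin> pi ` S" using pi_inj insert S i by (auto simp: qudits_def inj_on_def)
  have "cj V (EE (insert i S) B) = cj V (E i (EE S B))" using EE_insert[OF i insert(2) S] by simp
  also have "\<dots> = E (pi i) (EE (pi ` S) (cj V B))" using E_map[OF i, of "EE S B"] insert.IH[OF S] by simp
  also have "\<dots> = EE (insert (pi i) (pi ` S)) (cj V B)"
    using EE_insert[OF conjunct1[OF pi_prop[OF i]] ni pS] by simp
  finally show ?case by simp
qed

end


lemma root_sum: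
  assumes d: "0 < d" and k: "k < d" and k': "k' < d"
  shows "(\<Sum>t<d. cis (2 * pi * real (t * k) / real d) * cnj (cis (2 * pi * real (t * k') / real d)))
       = (if k = k' then of_nat d else 0)"
proof -
  define w where "w = cis (2 * pi * (real k - real k') / real d)"
  have tw: "cis (2 * pi * real (t * k) / real d) * cnj (cis (2 * pi * real (t * k') / real d)) = w ^ t" for t
    unfolding w_def DeMoivre cis_cnj cis_mult by (rule arg_cong[where f=cis]) (simp add: diff_divide_distrib[symmetric] algebra_simps)
  show ?thesis
  proof (cases "k = k'")
    case True
    show ?thesis unfolding tw using True by (simp add: w_def)
  next
    case False
    have w1: "w \<noteq> 1"
    proof
      assume "w = 1"
      then have "cos (2 * pi * (real k - real k') / real d) = 1" unfolding w_def
        by (metis Re_complex_of_real cis.sel(1) of_real_1)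
      then obtain m :: int where m: "2 * pi * (real k - real k') / real d = real_of_int m * 2 * pi"
        using cos_one_2pi_int by blast
      have h1: "(2 * pi) * (real k - real k') = (2 * pi) * (real_of_int m * real d)"
        using m d by (simp add: divide_eq_eq algebra_simps)
      then have "real k - real k' = m * real d" by simp
      then have e: "int k - int k' = m * int d" by (metis of_int_eq_iff of_int_mult of_int_diff of_int_of_nat_eq)
      show False
      proof (cases "m = 0")
        case True then show False using e False by simp
      next
        case False
        then have "\<bar>m * int d\<bar> \<ge> int d" using d by (simp add: abs_mult)
        then show False using e k k' by simp
      qed
    qed
    have wd: "w ^ d = 1"
    proof -
      have "w ^ d = cis (2 * pi * (real k - real k'))" unfolding w_def using d by (simp add: DeMoivre)
      also have "\<dots> = cis (2 * pi * of_int (int k - int k'))" by simp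
      also have "\<dots> = 1" by (rule cis_multiple_2pi) simp
      finally show ?thesis .
    qed
    have "(\<Sum>t<d. w ^ t) = (w ^ d - 1) / (w - 1)" by (rule geometric_sum[OF w1])
    then show ?thesis unfolding tw using False wd by simp
  qed
qed

lemma mod_uniq_le:
  assumes ab: "a \<le> b" and b: "b < (d::nat)" and h: "(k + a) mod d = (k + b) mod d"
  shows "a = b"
proof -
  have "d dvd (k + b) - (k + a)" using mod_eq_dvd_iff_nat[of "k + a" "k + b" d] h ab by simp
  then have "d dvd b - a" by simp
  moreover have "b - a < d" using b by simp
  ultimately have "b - a = 0" by (metis nat_dvd_not_less neq0_conv)
  then show "a = b" using ab by simp
qed

lemma mod_uniq:
  assumes "a < (d::nat)" "b < d" "(k + a) mod d = (k + b) mod d"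
  shows "a = b"
  using mod_uniq_le[of a b d k] mod_uniq_le[of b a d k] assms by (cases "a \<le> b") auto

lemma mod_solve:
  assumes d: "0 < (d::nat)" and k: "k < d" and j: "j < d" and s: "s < d"
  shows "(k + s) mod d = j \<longleftrightarrow> s = (j + d - k) mod d"
proof
  have e: "(k + (j + d - k) mod d) mod d = j"
  proof -
    have "(k + (j + d - k) mod d) mod d = (k + (j + d - k)) mod d" by (simp add: mod_add_right_eq)
    also have "k + (j + d - k) = j + d" using k by simp
    finally show ?thesis using j by simp
  qed
  {
    assume "(k + s) mod d = j"
    then show "s = (j + d - k) mod d" using mod_uniq[OF s _, of "(j + d - k) mod d" k] e d by simp
  }
  {
    assume "s = (j + d - k) mod d"
    then show "(k + s) mod d = j" using e by simp
  }
qed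

lemma pauli1_dual:
  assumes d: "0 < d" and j: "j < d" and k: "k < d" and j': "j' < d" and k': "k' < d"
  shows "(\<Sum>s<d. \<Sum>t<d. pauli1 d (s,t) j k * cnj (pauli1 d (s,t) j' k'))
       = (if j = j' \<and> k = k' then of_nat d else 0)"
proof -
  have "(\<Sum>s<d. \<Sum>t<d. pauli1 d (s,t) j k * cnj (pauli1 d (s,t) j' k'))
      = (\<Sum>s<d. if j = (k + s) mod d \<and> j' = (k' + s) mod d then (if k = k' then of_nat d else 0) else 0)"
    by (intro sum.cong refl) (auto simp: pauli1_def root_sum[OF d k k'] simp del: of_nat_mult)
  also have "\<dots> = (if j = j' \<and> k = k' then of_nat d else 0)"
  proof (cases "k = k' \<and> j = j'")
    case True
    then have "(\<Sum>s<d. if j = (k + s) mod d \<and> j' = (k' + s) mod d then (if k = k' then of_nat d else 0) else 0)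
        = (\<Sum>s<d. if s = (j + d - k) mod d then of_nat d else (0::complex))"
    proof (intro sum.cong refl)
      fix s assume "s \<in> {..<d}"
      then have "(k + s) mod d = j \<longleftrightarrow> s = (j + d - k) mod d" using mod_solve[OF d k j] by simp
      then show "(if j = (k + s) mod d \<and> j' = (k' + s) mod d then (if k = k' then of_nat d else 0) else 0)
          = (if s = (j + d - k) mod d then of_nat d else (0::complex))" using True by auto
    qed
    also have "\<dots> = of_nat d" using d by simp
    finally show ?thesis using True by simp
  next
    case False
    then show ?thesis by (auto intro!: sum.neutral)
  qed
  finally show ?thesis .
qed

lemma pstrings_0: "pstrings d 0 = {\<lambda>_. (0,0)}"
  by (auto simp: pstrings_def)

lemma pstr_sum:
  fixes g :: "nat \<Rightarrow> nat \<times> nat \<Rightarrow> complex"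
  shows "(\<Sum>a\<in>pstrings d n. \<Prod>i<n. g i (a i)) = (\<Prod>i<n. \<Sum>s<d. \<Sum>t<d. g i (s,t))"
proof (induction n)
  case 0 then show ?case by (simp add: pstrings_0)
next
  case (Suc n)
  let ?T = "pstrings d n \<times> ({..<d} \<times> {..<d})"
  let ?j = "\<lambda>a::pstring. (a(n:=(0,0)), a n)"
  let ?i = "\<lambda>(b::pstring,p::nat\<times>nat). b(n:=p)"
  have w1: "?i (?j a) = a" if "a \<in> pstrings d (Suc n)" for a by simp
  have w2: "?j a \<in> ?T" if a: "a \<in> pstrings d (Suc n)" for a
  proof -
    have "a(n:=(0,0)) \<in> pstrings d n" using a unfolding pstrings_def by auto
    moreover have "a n \<in> {..<d} \<times> {..<d}" using a unfolding pstrings_def by (auto simp: mem_Times_iff)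
    ultimately show ?thesis by simp
  qed
  have w3: "?j (?i bp) = bp" if bp: "bp \<in> ?T" for bp
  proof -
    obtain b p where e: "bp = (b,p)" by (cases bp) simp
    then have "b n = (0,0)" using bp unfolding pstrings_def by auto
    then show ?thesis using e by (simp add: fun_upd_idem)
  qed
  have w4: "?i bp \<in> pstrings d (Suc n)" if bp: "bp \<in> ?T" for bp
  proof -
    obtain b p where e: "bp = (b,p)" by (cases bp) simp
    have b: "b \<in> pstrings d n" and p: "p \<in> {..<d} \<times> {..<d}" using bp e by auto
    have "\<forall>i<Suc n. fst ((b(n:=p)) i) < d \<and> snd ((b(n:=p)) i) < d"
    proof (intro allI impI)
      fix i assume "i < Suc n"
      then show "fst ((b(n:=p)) i) < d \<and> snd ((b(n:=p)) i) < d"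
        using b p unfolding pstrings_def by (cases "i = n") (auto simp: mem_Times_iff)
    qed
    moreover have "\<forall>i\<ge>Suc n. (b(n:=p)) i = (0,0)" using b unfolding pstrings_def by auto
    ultimately show ?thesis using e unfolding pstrings_def by simp
  qed
  have w5: "(case ?j a of (b, p) \<Rightarrow> (\<Prod>i<n. g i (b i)) * g n p) = (\<Prod>i<Suc n. g i (a i))" for a
    by (simp add: lessThan_Suc mult.commute)
  have "(\<Sum>a\<in>pstrings d (Suc n). \<Prod>i<Suc n. g i (a i))
      = (\<Sum>(b,p)\<in>?T. (\<Prod>i<n. g i (b i)) * g n p)"
    apply (rule sum.reindex_bij_witness[of _ ?i ?j])
    apply (erule w1) apply (erule w2) apply (erule w3) apply (erule w4) apply (rule w5)
    done
  also have "\<dots> = (\<Sum>b\<in>pstrings d n. \<Sum>p\<in>{..<d} \<times> {..<d}. (\<Prod>i<n. g i (b i)) * g n p)"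
    by (simp add: sum.cartesian_product split_def)
  also have "\<dots> = (\<Sum>b\<in>pstrings d n. \<Prod>i<n. g i (b i)) * (\<Sum>p\<in>{..<d} \<times> {..<d}. g n p)"
    by (rule sum_product[symmetric])
  also have "(\<Sum>p\<in>{..<d} \<times> {..<d}. g n p) = (\<Sum>s<d. \<Sum>t<d. g n (s,t))"
    by (simp add: sum.cartesian_product)
  finally show ?case using Suc by (simp add: lessThan_Suc)
qed



lemma prod_if_const:
  fixes c :: complex
  shows "(\<Prod>i<n. if P i then c else 0) = (if \<forall>i<n. P i then c ^ n else 0)"
proof (cases "\<forall>i<n. P i")
  case True
  then have "(\<Prod>i<n. if P i then c else 0) = (\<Prod>i<n. c)" by (intro prod.cong) auto
  then show ?thesis using True by simp
next
  case False
  then obtain i where "i < n" "\<not> P i" by auto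
  then have "(\<Prod>i<n. if P i then c else 0) = 0" by (intro prod_zero) auto
  then show ?thesis using False by simp
qed

context qd begin

definition Pa :: "pstring \<Rightarrow> op" where "Pa a = R (pauli d n a)"
definition TP :: "op \<Rightarrow> pstring \<Rightarrow> complex" where "TP B a = trc (mm B (Pa a))"

lemma nrm_Pa[simp]: "nrm (Pa a)" by (simp add: Pa_def)

lemma TP_expand: "TP B a = (\<Sum>x\<in>C. \<Sum>z\<in>C. B x z * pauli d n a z x)"
  by (simp add: TP_def trc_def mm_def Pa_def R_def)

lemma pauli_dual:
  assumes z: "z \<in> C" and x: "x \<in> C" and z': "z' \<in> C" and x': "x' \<in> C"
  shows "(\<Sum>a\<in>pstrings d n. pauli d n a z x * cnj (pauli d n a z' x'))
       = (if z = z' \<and> x = x' then of_nat d ^ n else 0)"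
proof -
  have "(\<Sum>a\<in>pstrings d n. pauli d n a z x * cnj (pauli d n a z' x'))
      = (\<Sum>a\<in>pstrings d n. \<Prod>i<n. pauli1 d (a i) (z i) (x i) * cnj (pauli1 d (a i) (z' i) (x' i)))"
    by (simp add: pauli_def prod.distrib)
  also have "\<dots> = (\<Prod>i<n. \<Sum>s<d. \<Sum>t<d. pauli1 d (s,t) (z i) (x i) * cnj (pauli1 d (s,t) (z' i) (x' i)))"
    by (rule pstr_sum)
  also have "\<dots> = (\<Prod>i<n. if z i = z' i \<and> x i = x' i then of_nat d else 0)"
    using z x z' x' by (intro prod.cong refl) (simp add: pauli1_dual[OF d_pos] C_lt)
  also have "\<dots> = (if \<forall>i<n. z i = z' i \<and> x i = x' i then of_nat d ^ n else 0)"
    by (rule prod_if_const)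
  also have "(\<forall>i<n. z i = z' i \<and> x i = x' i) \<longleftrightarrow> z = z' \<and> x = x'"
    using z x z' x' by (auto simp: fun_eq_iff) (metis C_out not_less)+
  finally show ?thesis .
qed

lemma parseval: "(\<Sum>a\<in>pstrings d n. (cmod (TP B a))\<^sup>2) = real d ^ n * hs B"
proof -
  let ?Q = "C \<times> C"
  have TPq: "TP B a = (\<Sum>q\<in>?Q. B (fst q) (snd q) * pauli d n a (snd q) (fst q))" for a
    by (simp add: TP_expand sum.cartesian_product split_def)
  have "complex_of_real (\<Sum>a\<in>pstrings d n. (cmod (TP B a))\<^sup>2)
      = (\<Sum>a\<in>pstrings d n. TP B a * cnj (TP B a))"
    unfolding of_real_sum by (intro sum.cong refl) (metis cnj_mult_self mult.commute)
  also have "\<dots> = (\<Sum>a\<in>pstrings d n. \<Sum>q\<in>?Q. \<Sum>q'\<in>?Q.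
        (B (fst q) (snd q) * cnj (B (fst q') (snd q'))) * (pauli d n a (snd q) (fst q) * cnj (pauli d n a (snd q') (fst q'))))"
    by (simp add: TPq sum_product mult_ac)
  also have "\<dots> = (\<Sum>q\<in>?Q. \<Sum>q'\<in>?Q. \<Sum>a\<in>pstrings d n.
        (B (fst q) (snd q) * cnj (B (fst q') (snd q'))) * (pauli d n a (snd q) (fst q) * cnj (pauli d n a (snd q') (fst q'))))"
    by (simp only: sum.swap[where A="pstrings d n"])
  also have "\<dots> = (\<Sum>q\<in>?Q. \<Sum>q'\<in>?Q. (B (fst q) (snd q) * cnj (B (fst q') (snd q'))) * (if q = q' then of_nat d ^ n else 0))"
  proof (intro sum.cong refl)
    fix q q' assume q: "q \<in> ?Q" and q': "q' \<in> ?Q"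
    have "(snd q = snd q' \<and> fst q = fst q') \<longleftrightarrow> q = q'" by (auto simp: prod_eq_iff)
    then show "(\<Sum>a\<in>pstrings d n. (B (fst q) (snd q) * cnj (B (fst q') (snd q'))) * (pauli d n a (snd q) (fst q) * cnj (pauli d n a (snd q') (fst q'))))
        = (B (fst q) (snd q) * cnj (B (fst q') (snd q'))) * (if q = q' then of_nat d ^ n else 0)"
      using q q' by (simp add: sum_distrib_left[symmetric] pauli_dual mem_Times_iff)
  qed
  also have "\<dots> = (\<Sum>q\<in>?Q. (B (fst q) (snd q) * cnj (B (fst q) (snd q))) * of_nat d ^ n)"
    using finC by (simp add: if_distrib[of "\<lambda>u. _ * u"] sum.delta' cong: if_cong)
  also have "\<dots> = (\<Sum>q\<in>?Q. of_real ((cmod (B (fst q) (snd q)))\<^sup>2) * of_nat d ^ n)"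
    by (intro sum.cong refl) (metis cnj_mult_self mult.commute)
  also have "\<dots> = of_real (real d ^ n * hs B)"
    by (simp add: hs_def sum.cartesian_product split_def sum_distrib_left mult.commute)
  finally show ?thesis using of_real_eq_iff by blast
qed

end


context qd begin

lemma pauli_split: "i < n \<Longrightarrow> pauli d n a x y = pauli1 d (a i) (x i) (y i) * (\<Prod>k\<in>{..<n}-{i}. pauli1 d (a k) (x k) (y k))"
  by (simp add: pauli_def prod.remove)

lemma rest_upd: "(\<Prod>k\<in>{..<n}-{i}. pauli1 d (a k) ((x(i:=u)) k) ((y(i:=v)) k)) = (\<Prod>k\<in>{..<n}-{i}. pauli1 d (a k) (x k) (y k))"
  by (intro prod.cong refl) auto

lemma pauli1_00: "v < d \<Longrightarrow> pauli1 d (0,0) u v = (if u = v then 1 else 0)"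
  by (simp add: pauli1_def)

lemma diag_sum:
  assumes p: "fst p < d" "snd p < d" and nz: "p \<noteq> (0,0)"
  shows "(\<Sum>u<d. pauli1 d p u u) = 0"
proof (cases "fst p = 0")
  case False
  have "pauli1 d p u u = 0" if "u < d" for u
  proof -
    have "u \<noteq> (u + fst p) mod d"
    proof
      assume "u = (u + fst p) mod d"
      then have "(u + 0) mod d = (u + fst p) mod d" using that by simp
      then show False using mod_uniq[OF d_pos p(1)] False by metis
    qed
    then show ?thesis by (simp add: pauli1_def)
  qed
  then show ?thesis by simp
next
  case True
  then have t: "snd p \<noteq> 0" using nz by (cases p) auto
  have "(\<Sum>u<d. pauli1 d p u u) = (\<Sum>u<d. cis (2 * pi * real (u * snd p) / real d) * cnj (cis (2 * pi * real (u * 0) / real d)))"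
    using True by (intro sum.cong refl) (simp add: pauli1_def mult.commute)
  also have "\<dots> = 0" using root_sum[OF d_pos p(2) d_pos] t by simp
  finally show ?thesis .
qed

lemma E_Pa:
  assumes a: "a \<in> pstrings d n" and i: "i < n"
  shows "E i (Pa a) = (if a i = (0,0) then Pa a else zo)"
proof (cases "a i = (0,0)")
  case True
  have "E i (Pa a) = Pa a"
  proof (rule triv_fix[OF i nrm_Pa])
    fix x y assume x: "x \<in> C" and y: "y \<in> C"
    have x0: "x(i:=0) \<in> C" "y(i:=0) \<in> C" using C_upd x y i d_pos by auto
    show "Pa a x y = (if x i = y i then Pa a (x(i:=0)) (y(i:=0)) else 0)"
      using x y x0 True C_lt[OF y] d_pos
      by (simp add: Pa_def R_def pauli_split[OF i] pauli1_00 rest_upd[of a "x" i 0 y 0, simplified])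
  qed
  then show ?thesis using True by simp
next
  case False
  have p: "fst (a i) < d" "snd (a i) < d" using a i by (auto simp: pstrings_def)
  have "E i (Pa a) = zo"
  proof (rule nrm_eqI[OF nrm_E nrm_zo])
    fix x y assume x: "x \<in> C" and y: "y \<in> C"
    have "(\<Sum>t<d. Pa a (x(i:=t)) (y(i:=t))) = (\<Sum>t<d. pauli1 d (a i) t t) * (\<Prod>k\<in>{..<n}-{i}. pauli1 d (a k) (x k) (y k))"
      by (simp add: sum_distrib_right Pa_def R_def C_upd x y i pauli_split[OF i] rest_upd)
    also have "\<dots> = 0" using diag_sum[OF p False] by simp
    finally show "E i (Pa a) x y = zo x y" using x y by (simp add: E_apply zo_def)
  qed
  then show ?thesis using False by simp
qed

lemma trc_zo[simp]: "trc zo = 0" by (simp add: trc_def zo_def)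

lemma TP_fix: assumes a: "a \<in> pstrings d n" and i: "i < n" and ai: "a i = (0,0)"
  shows "TP B a = TP (E i B) a"
proof -
  have f: "E i (Pa a) = Pa a" using E_Pa[OF a i] ai by simp
  have "TP B a = trc (E i (mm B (Pa a)))" by (simp add: TP_def E_trc[OF i])
  also have "\<dots> = TP (E i B) a" by (simp add: TP_def E_bimod_right[OF i f])
  finally show ?thesis .
qed

lemma TP_zero: assumes a: "a \<in> pstrings d n" and i: "i < n" and ai: "a i \<noteq> (0,0)"
  shows "TP (E i B) a = 0"
proof -
  have f: "E i (Pa a) = zo" using E_Pa[OF a i] ai by simp
  have "TP (E i B) a = trc (E i (mm (E i B) (Pa a)))" by (simp add: TP_def E_trc[OF i])
  also have "\<dots> = 0" by (simp add: E_bimod_left[OF i E_idem[OF i]] f)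
  finally show ?thesis .
qed

lemma tr_pauli: "tr d N (mmul d N B (pauli d n a)) = TP (R B) a"
  by (simp add: tr_def mmul_def TP_expand R_def)

lemma pweight_sum: "real (pweight n a) = (\<Sum>i<n. if a i \<noteq> (0,0) then 1 else 0)"
proof -
  have "{i. i < n \<and> a i \<noteq> (0,0)} = {..<n} \<inter> {i. a i \<noteq> (0,0)}" by auto
  then show ?thesis by (simp add: pweight_def sum.If_cases)
qed

lemma influence_Phi: "influence d n B = Phi (R B) / real d ^ n"
proof -
  let ?B = "R B"
  let ?ps = "pstrings d n"
  have nB: "nrm ?B" by simp
  have key: "(\<Sum>a\<in>?ps. if a i \<noteq> (0,0) then (cmod (TP ?B a))\<^sup>2 else 0) = real d ^ n * hs (F i ?B)" if i: "i < n" for i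
  proof -
    have "(\<Sum>a\<in>?ps. if a i \<noteq> (0,0) then (cmod (TP ?B a))\<^sup>2 else 0)
        = (\<Sum>a\<in>?ps. (cmod (TP ?B a))\<^sup>2 - (cmod (TP (E i ?B) a))\<^sup>2)"
    proof (intro sum.cong refl)
      fix a assume a: "a \<in> ?ps"
      show "(if a i \<noteq> (0,0) then (cmod (TP ?B a))\<^sup>2 else 0) = (cmod (TP ?B a))\<^sup>2 - (cmod (TP (E i ?B) a))\<^sup>2"
      proof (cases "a i = (0,0)")
        case True then show ?thesis using TP_fix[OF a i True, of ?B] by simp
      next
        case False then show ?thesis using TP_zero[OF a i False, of ?B] by simp
      qed
    qed
    also have "\<dots> = real d ^ n * hs ?B - real d ^ n * hs (E i ?B)"
      by (simp add: sum_subtractf parseval)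
    also have "\<dots> = real d ^ n * hs (F i ?B)"
      using E_pyth[OF i nB] by (simp add: F_def algebra_simps)
    finally show ?thesis .
  qed
  let ?D = "real d ^ (2 * n)"
  have "influence d n B = (\<Sum>a\<in>?ps. (\<Sum>i<n. if a i \<noteq> (0,0) then 1 else 0) * ((cmod (TP ?B a))\<^sup>2 / ?D))"
    unfolding influence_def pweightdist_def pweight_sum tr_pauli by simp
  also have "\<dots> = (\<Sum>a\<in>?ps. (\<Sum>i<n. if a i \<noteq> (0,0) then (cmod (TP ?B a))\<^sup>2 else 0) / ?D)"
  proof (intro sum.cong refl)
    fix a
    show "(\<Sum>i<n. if a i \<noteq> (0,0) then 1 else 0) * ((cmod (TP ?B a))\<^sup>2 / ?D) = (\<Sum>i<n. if a i \<noteq> (0,0) then (cmod (TP ?B a))\<^sup>2 else 0) / ?D"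
      unfolding sum_distrib_right sum_divide_distrib by (intro sum.cong refl) auto
  qed
  also have "\<dots> = (\<Sum>a\<in>?ps. \<Sum>i<n. if a i \<noteq> (0,0) then (cmod (TP ?B a))\<^sup>2 else 0) / ?D"
    by (simp only: sum_divide_distrib)
  also have "\<dots> = (\<Sum>i<n. \<Sum>a\<in>?ps. if a i \<noteq> (0,0) then (cmod (TP ?B a))\<^sup>2 else 0) / ?D"
    by (simp only: sum.swap[of _ ?ps])
  also have "\<dots> = (\<Sum>i<n. real d ^ n * hs (F i ?B)) / ?D"
    using key by simp
  also have "\<dots> = (real d ^ n * Phi ?B) / (real d ^ n * real d ^ n)"
    by (simp only: Phi_def sum_distrib_left[symmetric] mult_2 power_add)
  also have "\<dots> = Phi ?B / real d ^ n" using d_pos by simp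
  finally show ?thesis .
qed

end


context qd begin

lemma tr_adj_self: "tr d N (mmul d N (adj B) B) = of_real (hs (R B))"
proof -
  have "tr d N (mmul d N (adj B) B) = (\<Sum>x\<in>C. \<Sum>z\<in>C. cnj (B z x) * B z x)"
    by (simp add: tr_def mmul_def adj_def)
  also have "\<dots> = (\<Sum>z\<in>C. \<Sum>x\<in>C. cnj (B z x) * B z x)" by (rule sum.swap)
  also have "\<dots> = of_real (hs (R B))"
    by (simp add: hs_def R_def cnj_mult_self cong: sum.cong)
  finally show ?thesis .
qed

lemma norm2_hs: "norm2 d n B = sqrt (hs (R B) / real d ^ n)"
  by (simp add: norm2_def tr_adj_self)

lemma R_conj_by: "R (conj_by d n U B) = cj (R U) (R B)"
  by (auto simp: R_def conj_by_def cj_def mm_def mmul_def adj_def fun_eq_iff intro!: sum.cong)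

lemma unitary_uni: "unitary d n U \<Longrightarrow> uni (R U)"
  unfolding uni_def
proof (intro conjI nrm_R)
  assume u: "unitary d n U"
  show "mm (R U) (adj (R U)) = Id"
    by (rule nrm_eqI[OF nrm_mm nrm_Id]) (use u in \<open>auto simp: unitary_def mm_def mmul_def adj_def R_def Id_def idop_def\<close>)
  show "mm (adj (R U)) (R U) = Id"
    by (rule nrm_eqI[OF nrm_mm nrm_Id]) (use u in \<open>auto simp: unitary_def mm_def mmul_def adj_def R_def Id_def idop_def\<close>)
qed

lemma Phi_le: "nrm X \<Longrightarrow> Phi X \<le> real n * hs X"
proof -
  assume nX: "nrm X"
  have "Phi X \<le> (\<Sum>i<n. hs X)" unfolding Phi_def F_def
    by (rule sum_mono) (use E_hs_le2 nX in auto)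
  then show ?thesis by simp
qed

lemma Phi_nonneg: "0 \<le> Phi X" unfolding Phi_def by (intro sum_nonneg) (simp add: hs_nonneg)

lemma F_sc: "F i (sc c X) = sc c (F i X)"
  unfolding F_def E_sc by (simp add: sc_def osub_def fun_eq_iff algebra_simps)

lemma Phi_sc: "Phi (sc c X) = (cmod c)\<^sup>2 * Phi X"
  by (simp add: Phi_def F_sc hs_sc sum_distrib_left)

lemma CiS_Phi:
  assumes u: "unitary d n U" and cis: "CiS d n U = 0" and nB: "nrm B"
  shows "Phi (cj (R U) B) = Phi B"
proof -
  let ?V = "R U"
  have uV: "uni ?V" by (rule unitary_uni[OF u])
  let ?S = "{B. norm2 d n B = 1}"
  let ?f = "\<lambda>B. \<bar>influence d n (conj_by d n U B) - influence d n B\<bar>"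
  have infl: "influence d n (conj_by d n U B') = Phi (cj ?V (R B')) / real d ^ n" for B'
    by (simp add: influence_Phi R_conj_by)
  have hsS: "hs (R B') = real d ^ n" if "B' \<in> ?S" for B'
  proof -
    have "sqrt (hs (R B') / real d ^ n) = 1" using that by (simp only: mem_Collect_eq norm2_hs)
    then have h: "hs (R B') / real d ^ n = 1" by (simp only: real_sqrt_eq_1_iff)
    have "0 < real d ^ n" using d_pos by simp
    then show ?thesis using h by (auto simp: field_simps)
  qed
  have bnd: "?f B' \<le> 2 * real n" if "B' \<in> ?S" for B'
  proof -
    have h: "hs (cj ?V (R B')) = real d ^ n" using cj_hs[OF uV] hsS[OF that] by simp
    have a: "Phi (cj ?V (R B')) \<le> real n * real d ^ n" using Phi_le[OF nrm_cj[of ?V "R B'"]] h by simp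
    have b: "Phi (R B') \<le> real n * real d ^ n" using Phi_le[OF nrm_R[of B']] hsS[OF that] by simp
    have p1: "0 \<le> Phi (cj ?V (R B')) / real d ^ n" "0 \<le> Phi (R B') / real d ^ n"
      using Phi_nonneg[of "cj ?V (R B')"] Phi_nonneg[of "R B'"] by simp_all
    have "?f B' \<le> Phi (cj ?V (R B')) / real d ^ n + Phi (R B') / real d ^ n"
      using p1 by (simp add: influence_Phi R_conj_by abs_le_iff)
    also have "\<dots> \<le> real n + real n"
      using a b d_pos by (intro add_mono) (simp_all add: divide_le_eq)
    finally show ?thesis by simp
  qed
  have bdd: "bdd_above (?f ` ?S)" using bnd by (intro bdd_aboveI2) auto
  have eqS: "Phi (cj ?V (R B')) = Phi (R B')" if "B' \<in> ?S" for B'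
  proof -
    have "?f B' \<le> CiS d n U" unfolding CiS_def by (rule cSUP_upper[OF that bdd])
    then have "?f B' = 0" using cis by simp
    then show ?thesis using d_pos by (simp add: influence_Phi R_conj_by)
  qed
  show ?thesis
  proof (cases "hs B = 0")
    case True
    then have "B = zo" using hs_zero nB by simp
    then show ?thesis by (simp add: cj_zo)
  next
    case False
    then have hp: "0 < hs B" using hs_nonneg by (simp add: order_less_le)
    define c where "c = sqrt (hs B / real d ^ n)"
    have cp: "0 < c" using hp d_pos by (simp add: c_def)
    define B1 where "B1 = sc (complex_of_real (1 / c)) B"
    have nB1: "nrm B1" using nB by (simp add: B1_def)
    have "hs (R B1) = hs B / c\<^sup>2" using R_nrm[OF nB1] cp by (simp add: B1_def hs_sc power_divide norm_divide)
    also have "c\<^sup>2 = hs B / real d ^ n" using hp d_pos by (simp add: c_def)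
    finally have "hs (R B1) = real d ^ n" using hp d_pos by simp
    then have "B1 \<in> ?S" using d_pos by (simp add: norm2_hs)
    then have "Phi (cj ?V B1) = Phi B1" using eqS R_nrm[OF nB1] by metis
    then have "(cmod (complex_of_real (1 / c)))\<^sup>2 * Phi (cj ?V B) = (cmod (complex_of_real (1 / c)))\<^sup>2 * Phi B"
      by (simp add: B1_def cj_sc Phi_sc)
    then show ?thesis using cp by simp
  qed
qed

lemma merge_SA: "A \<subseteq> N \<Longrightarrow> z \<in> cfgs d (N - A) \<Longrightarrow> x \<in> C \<Longrightarrow> merge (N - A) z x = merge A x z"
  by (auto simp: merge_def fun_eq_iff cfgs_def)

lemma mergeA_C: "A \<subseteq> N \<Longrightarrow> x \<in> C \<Longrightarrow> z \<in> cfgs d (N - A) \<Longrightarrow> merge A x z \<in> C"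
  by (auto simp: merge_def cfgs_def)

lemma red_trc:
  assumes A: "A \<subseteq> N"
  shows "tr d A (mmul d A (reduced d n A \<sigma>) (reduced d n A \<sigma>))
       = of_nat d ^ card (N - A) * trc (mm (EE (N - A) (R \<sigma>)) (EE (N - A) (R \<sigma>)))"
proof -
  let ?S = "N - A"
  let ?r = "reduced d n A \<sigma>"
  let ?D = "(of_nat d ^ card ?S :: complex)"
  have D0: "?D \<noteq> 0" using d_pos by simp
  have cS: "card (cfgs d ?S) = d ^ card ?S" by (rule card_cfgs) (simp add: qudits_def)
  have fS: "finite (cfgs d ?S)" by (rule finite_cfgs) (simp add: qudits_def)
  have fA: "finite (cfgs d A)" by (rule finite_cfgs) (use A finite_subset in \<open>auto simp: qudits_def\<close>)
  have EEv: "EE ?S (R \<sigma>) x y = (if \<forall>k\<in>?S. x k = y k then ?r x y / ?D else 0)" if x: "x \<in> C" and y: "y \<in> C" for x y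
  proof -
    have "(\<Sum>z\<in>cfgs d ?S. R \<sigma> (merge ?S z x) (merge ?S z y)) = ?r x y"
      unfolding reduced_def
      by (intro sum.cong refl) (simp add: R_def x y merge_SA[OF A] mergeA_C[OF A])
    then show ?thesis using x y by (simp add: EE_def)
  qed
  have rm: "?r (merge A a u) (merge A b v) = ?r a b" for a b u v
    by (simp add: reduced_def merge_def cong: if_cong)
  have split: "sum f C = (\<Sum>a\<in>cfgs d A. \<Sum>u\<in>cfgs d ?S. f (merge A a u))" for f
  proof -
    have "C = cfgs d (A \<union> ?S)" using A by (simp add: Un_absorb1)
    then show ?thesis using cfgs_merge_split[of A ?S f] by auto
  qed
  have agree: "(\<forall>k\<in>?S. merge A a u k = merge A b v k) \<longleftrightarrow> u = v"
    if "u \<in> cfgs d ?S" "v \<in> cfgs d ?S" for a b u v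
    using that by (auto simp: merge_def cfgs_def fun_eq_iff) (metis Diff_iff)+
  have mC: "merge A a u \<in> C" if "a \<in> cfgs d A" "u \<in> cfgs d ?S" for a u
    using that A by (auto simp: merge_def cfgs_def)
  have "trc (mm (EE ?S (R \<sigma>)) (EE ?S (R \<sigma>)))
      = (\<Sum>x\<in>C. \<Sum>y\<in>C. EE ?S (R \<sigma>) x y * EE ?S (R \<sigma>) y x)"
    by (simp add: trc_def mm_def)
  also have "\<dots> = (\<Sum>a\<in>cfgs d A. \<Sum>u\<in>cfgs d ?S. \<Sum>b\<in>cfgs d A. \<Sum>v\<in>cfgs d ?S.
        if u = v then ?r a b * ?r b a / (?D * ?D) else 0)"
    unfolding split
  proof (intro sum.cong refl)
    fix a u b v assume a: "a \<in> cfgs d A" and u: "u \<in> cfgs d ?S" and b: "b \<in> cfgs d A" and v: "v \<in> cfgs d ?S"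
    have ag2: "(\<forall>k\<in>?S. merge A b v k = merge A a u k) \<longleftrightarrow> u = v" using agree[OF v u, of b a] by auto
    show "EE ?S (R \<sigma>) (merge A a u) (merge A b v) * EE ?S (R \<sigma>) (merge A b v) (merge A a u)
        = (if u = v then ?r a b * ?r b a / (?D * ?D) else 0)"
      using agree[OF u v, of a b] ag2 by (simp add: EEv mC a b u v rm)
  qed
  also have "\<dots> = (\<Sum>a\<in>cfgs d A. \<Sum>u\<in>cfgs d ?S. \<Sum>b\<in>cfgs d A. ?r a b * ?r b a / (?D * ?D))"
    using fS by (simp add: sum.delta)
  also have "\<dots> = (\<Sum>a\<in>cfgs d A. \<Sum>b\<in>cfgs d A. ?r a b * ?r b a / ?D)"
  proof -
    have e: "\<And>x. ?D * (x / (?D * ?D)) = x / ?D" using D0 by (simp add: field_simps)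
    show ?thesis using d_pos by (simp add: cS sum_distrib_left e)
  qed
  also have "\<dots> = (\<Sum>a\<in>cfgs d A. \<Sum>b\<in>cfgs d A. ?r a b * ?r b a) / ?D"
    by (simp add: sum_divide_distrib)
  finally have "trc (mm (EE ?S (R \<sigma>)) (EE ?S (R \<sigma>))) = (\<Sum>a\<in>cfgs d A. \<Sum>b\<in>cfgs d A. ?r a b * ?r b a) / ?D" .
  moreover have "tr d A (mmul d A ?r ?r) = (\<Sum>a\<in>cfgs d A. \<Sum>b\<in>cfgs d A. ?r a b * ?r b a)"
    by (simp add: tr_def mmul_def)
  ultimately show ?thesis using D0 by simp
qed

end

lemma (in qdV) renyi_map:
  assumes A: "A \<subseteq> N"
  shows "renyi2 d (pi ` A) (reduced d n (pi ` A) (cj V \<rho>)) = renyi2 d A (reduced d n A \<rho>)"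
proof -
  have fS: "finite (N - A)" "N - A \<subseteq> N" by (auto simp: qudits_def)
  have inj: "inj_on pi N" using pi_inj by (simp add: qudits_def)
  have piN: "pi ` N = N" using pi_range by (simp add: qudits_def)
  have pA: "pi ` A \<subseteq> N" using A piN by auto
  have NpA: "N - pi ` A = pi ` (N - A)" using inj A piN by (metis Diff_subset inj_on_image_set_diff)
  have cd: "card (N - pi ` A) = card (N - A)" unfolding NpA by (rule card_image) (use inj inj_on_subset in blast)
  have "tr d (pi ` A) (mmul d (pi ` A) (reduced d n (pi ` A) (cj V \<rho>)) (reduced d n (pi ` A) (cj V \<rho>)))
      = of_nat d ^ card (N - A) * trc (mm (EE (pi ` (N - A)) (cj V \<rho>)) (EE (pi ` (N - A)) (cj V \<rho>)))"
    using red_trc[OF pA, of "cj V \<rho>"] cd by (simp add: NpA R_nrm)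
  also have "EE (pi ` (N - A)) (cj V \<rho>) = cj V (EE (N - A) (R \<rho>))"
    using EE_map[OF fS, of "R \<rho>"] cj_R by simp
  also have "trc (mm (cj V (EE (N - A) (R \<rho>))) (cj V (EE (N - A) (R \<rho>)))) = trc (mm (EE (N - A) (R \<rho>)) (EE (N - A) (R \<rho>)))"
    by (simp add: cj_mm[OF uV, symmetric] cj_trc[OF uV])
  also have "of_nat d ^ card (N - A) * \<dots> = tr d A (mmul d A (reduced d n A \<rho>) (reduced d n A \<rho>))"
    using red_trc[OF A, of \<rho>] by simp
  finally show ?thesis by (simp add: renyi2_def)
qed

lemma (in qdV) avg_map: "avg_renyi2 d n (cj V \<rho>) = avg_renyi2 d n \<rho>"
proof -
  interpret W: qdV d n "adj V" by (rule qdV_adj)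
  have inj: "inj_on pi N" using pi_inj by (simp add: qudits_def)
  have piN: "pi ` N = N" using pi_range by (simp add: qudits_def)
  have injP: "inj_on (\<lambda>A. pi ` A) (Pow N)"
    using inj by (auto simp: inj_on_def inj_on_image_eq_iff[OF inj])
  have imP: "(\<lambda>A. pi ` A) ` Pow N = Pow N"
  proof
    show "(\<lambda>A. pi ` A) ` Pow N \<subseteq> Pow N" using piN by auto
    show "Pow N \<subseteq> (\<lambda>A. pi ` A) ` Pow N"
    proof
      fix B assume B: "B \<in> Pow N"
      have "pi ` (W.pi ` B) = B" using B pi_inv' by (force simp: qudits_def image_image)
      moreover have "W.pi ` B \<subseteq> N" using B W.pi_prop by (auto simp: qudits_def)
      ultimately show "B \<in> (\<lambda>A. pi ` A) ` Pow N" by blast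
    qed
  qed
  have "(\<Sum>A\<in>Pow N. renyi2 d A (reduced d n A (cj V \<rho>)))
      = (\<Sum>A\<in>(\<lambda>A. pi ` A) ` Pow N. renyi2 d A (reduced d n A (cj V \<rho>)))" using imP by simp
  also have "\<dots> = (\<Sum>A\<in>Pow N. renyi2 d (pi ` A) (reduced d n (pi ` A) (cj V \<rho>)))"
    by (rule sum.reindex[OF injP, unfolded comp_def])
  also have "\<dots> = (\<Sum>A\<in>Pow N. renyi2 d A (reduced d n A \<rho>))"
    by (intro sum.cong refl) (simp add: renyi_map)
  finally show ?thesis by (simp add: avg_renyi2_def)
qed




lemma (in qd) renyi_R:
  assumes "R \<sigma> = R \<sigma>'" "A \<subseteq> N"
  shows "renyi2 d A (reduced d n A \<sigma>) = renyi2 d A (reduced d n A \<sigma>')"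
  using red_trc[OF assms(2), of \<sigma>] red_trc[OF assms(2), of \<sigma>'] assms(1) by (simp add: renyi2_def)

lemma (in qd) avg_R:
  assumes "R \<sigma> = R \<sigma>'"
  shows "avg_renyi2 d n \<sigma> = avg_renyi2 d n \<sigma>'"
  unfolding avg_renyi2_def using renyi_R[OF assms] by (intro arg_cong[where f="\<lambda>x. x / _"] sum.cong) auto

theorem mainTheorem18:
  fixes d n :: nat and U \<rho> :: op
  assumes "d \<ge> 2" and "n \<ge> 1"
    and "unitary d n U"
    and "CiS d n U = 0"
    and "density d n \<rho>"
  shows "avg_renyi2 d n (conj_by d n U \<rho>) \<le> avg_renyi2 d n \<rho>"
proof -
  interpret qd d n using assms(1) by unfold_locales
  interpret V: qdV d n "R U"
    using unitary_uni[OF assms(3)] CiS_Phi[OF assms(3) assms(4)] by unfold_locales auto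
  have "R (conj_by d n U \<rho>) = R (cj (R U) \<rho>)"
    by (simp add: R_conj_by cj_R R_nrm)
  then have "avg_renyi2 d n (conj_by d n U \<rho>) = avg_renyi2 d n (cj (R U) \<rho>)" by (rule avg_R)
  also have "\<dots> = avg_renyi2 d n \<rho>" by (rule V.avg_map)
  finally show ?thesis by simp
qed


end
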